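(* Let $r\ge1$ and $z\in\mathbb{C}$, $z\ne0$. The algebra $\mathcal{P}'_r(z)$ is isomorphic to the algebra generated by elements $s_1,\dots,s_{r-1},p_1,\dots,p_r$ subject to the relations (a) $p_j^2=zp_j$, and $p_ip_j=p_jp_i$ for $i\ne j$; (b) $s_i^2=1$, $s_is_{i+1}s_i=s_{i+1}s_is_{i+1}$, and $s_is_j=s_js_i$ if $|i-j|>1$; (c) $s_ip_ip_{i+1}=p_ip_{i+1}s_i=p_ip_{i+1}$, $s_ip_is_i=p_{i+1}$, and $s_ip_j=p_js_i$ if $j\ne i,i+1$; the isomorphism sending $s_i$ to the permutation swapping $i$ and $i+1$, and $p_j$ to the identity map of $\{1,\dots,r\}\setminus\{j\}$.
   Context: A partial permutation of $\{1,\dots,r\}$ is a bijection $d:X\to Y$ between subsets $X=\mathrm{dom}(d)$, $Y=\mathrm{im}(d)$ of $\{1,\dots,r\}$; maps are written on the right and composed by $x(d_1\circ d_2)=(xd_1)d_2$. The algebra $\mathcal{P}'_r(z)$ has basis the set of partial permutations of $\{1,\dots,r\}$ and product $d_1d_2=z^{N}(d_1\circ d_2)$ where $N=r-|\mathrm{im}(d_1)\cup\mathrm{dom}(d_2)|$; equivalently, it is the subalgebra of the partition algebra $\mathcal{P}_r(z)$ spanned by the set-partition diagrams of $\{1,\dots,r,1',\dots,r'\}$ whose blocks have size $1$ or $2$, every $2$-block containing one element of $\{1,\dots,r\}$ and one of $\{1',\dots,r'\}$ (the block $\{i,j'\}$ corresponding to $i\mapsto j$). *)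

theory Defs
  imports Complex_Main
begin

definition pperm :: "nat \<Rightarrow> (nat \<rightharpoonup> nat) set" where
  "pperm r = {d. dom d \<subseteq> {1..r} \<and> ran d \<subseteq> {1..r} \<and> inj_on d (dom d)}"

text \<open>Composition with maps written on the right: x (d1 o d2) = (x d1) d2.\<close>
definition pcomp :: "(nat \<rightharpoonup> nat) \<Rightarrow> (nat \<rightharpoonup> nat) \<Rightarrow> (nat \<rightharpoonup> nat)" where
  "pcomp d1 d2 = d2 \<circ>\<^sub>m d1"

definition pexp :: "nat \<Rightarrow> (nat \<rightharpoonup> nat) \<Rightarrow> (nat \<rightharpoonup> nat) \<Rightarrow> nat" where
  "pexp r d1 d2 = r - card (ran d1 \<union> dom d2)"

section \<open>The algebra P'_r(z), as finitely supported coefficient functions\<close>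

definition PA :: "nat \<Rightarrow> ((nat \<rightharpoonup> nat) \<Rightarrow> complex) set" where
  "PA r = {f. \<forall>d. d \<notin> pperm r \<longrightarrow> f d = 0}"

definition pmult :: "nat \<Rightarrow> complex \<Rightarrow> ((nat \<rightharpoonup> nat) \<Rightarrow> complex)
    \<Rightarrow> ((nat \<rightharpoonup> nat) \<Rightarrow> complex) \<Rightarrow> ((nat \<rightharpoonup> nat) \<Rightarrow> complex)" where
  "pmult r z f g = (\<lambda>e. \<Sum>d1\<in>pperm r. \<Sum>d2\<in>pperm r.
      if pcomp d1 d2 = e then z ^ pexp r d1 d2 * f d1 * g d2 else 0)"

definition bas :: "(nat \<rightharpoonup> nat) \<Rightarrow> ((nat \<rightharpoonup> nat) \<Rightarrow> complex)" where
  "bas d = (\<lambda>e. if e = d then 1 else 0)"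

definition pid :: "nat \<Rightarrow> (nat \<rightharpoonup> nat)" where
  "pid r = (\<lambda>x. if x \<in> {1..r} then Some x else None)"

definition sperm :: "nat \<Rightarrow> nat \<Rightarrow> (nat \<rightharpoonup> nat)" where
  "sperm r i = (\<lambda>x. if x = i then Some (i+1) else if x = i+1 then Some i
                  else if x \<in> {1..r} then Some x else None)"

definition pproj :: "nat \<Rightarrow> nat \<Rightarrow> (nat \<rightharpoonup> nat)" where
  "pproj r j = (\<lambda>x. if x \<in> {1..r} \<and> x \<noteq> j then Some x else None)"

text \<open>mul: multiplication, one: unit, zs: multiplication by the scalar z,
  s i for 1 \<le> i \<le> r-1, p j for 1 \<le> j \<le> r.\<close>
definition rels :: "nat \<Rightarrow> ('b \<Rightarrow> 'b \<Rightarrow> 'b) \<Rightarrow> 'b \<Rightarrow> ('b \<Rightarrow> 'b)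
     \<Rightarrow> (nat \<Rightarrow> 'b) \<Rightarrow> (nat \<Rightarrow> 'b) \<Rightarrow> bool" where
  "rels r mul one zs s p \<longleftrightarrow>
     \<comment> \<open>(a)\<close>
     (\<forall>j\<in>{1..r}. mul (p j) (p j) = zs (p j)) \<and>
     (\<forall>i\<in>{1..r}. \<forall>j\<in>{1..r}. i \<noteq> j \<longrightarrow> mul (p i) (p j) = mul (p j) (p i)) \<and>
     \<comment> \<open>(b)\<close>
     (\<forall>i\<in>{1..r-1}. mul (s i) (s i) = one) \<and>
     (\<forall>i\<in>{1..r-1}. i + 1 \<le> r - 1 \<longrightarrow>
        mul (mul (s i) (s (i+1))) (s i) = mul (mul (s (i+1)) (s i)) (s (i+1))) \<and>
     (\<forall>i\<in>{1..r-1}. \<forall>j\<in>{1..r-1}. (i + 1 < j \<or> j + 1 < i) \<longrightarrow>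
        mul (s i) (s j) = mul (s j) (s i)) \<and>
     \<comment> \<open>(c)\<close>
     (\<forall>i\<in>{1..r-1}. mul (s i) (mul (p i) (p (i+1))) = mul (p i) (p (i+1)) \<and>
                    mul (mul (p i) (p (i+1))) (s i) = mul (p i) (p (i+1))) \<and>
     (\<forall>i\<in>{1..r-1}. mul (mul (s i) (p i)) (s i) = p (i+1)) \<and>
     (\<forall>i\<in>{1..r-1}. \<forall>j\<in>{1..r}. j \<noteq> i \<and> j \<noteq> i + 1 \<longrightarrow>
        mul (s i) (p j) = mul (p j) (s i))"

text \<open>A unital complex algebra is modelled as a ring_1 type together with a
  unital ring homomorphism from the complex numbers into its centre.\<close>
definition cplx_alg :: "(complex \<Rightarrow> 'a::ring_1) \<Rightarrow> bool" where
  "cplx_alg \<iota> \<longleftrightarrow> (\<forall>a b. \<iota> (a + b) = \<iota> a + \<iota> b) \<and> (\<forall>a b. \<iota> (a * b) = \<iota> a * \<iota> b)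
     \<and> \<iota> 1 = 1 \<and> (\<forall>a x. \<iota> a * x = x * \<iota> a)"

definition PA_hom :: "nat \<Rightarrow> complex \<Rightarrow> (complex \<Rightarrow> 'a::ring_1)
     \<Rightarrow> (((nat \<rightharpoonup> nat) \<Rightarrow> complex) \<Rightarrow> 'a) \<Rightarrow> bool" where
  "PA_hom r z \<iota> \<phi> \<longleftrightarrow>
     (\<forall>f\<in>PA r. \<forall>g\<in>PA r. \<phi> (\<lambda>e. f e + g e) = \<phi> f + \<phi> g) \<and>
     (\<forall>c. \<forall>f\<in>PA r. \<phi> (\<lambda>e. c * f e) = \<iota> c * \<phi> f) \<and>
     (\<forall>f\<in>PA r. \<forall>g\<in>PA r. \<phi> (pmult r z f g) = \<phi> f * \<phi> g) \<and>
     \<phi> (bas (pid r)) = 1"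

end

theory Submission
  imports Defs "HOL-Combinatorics.Permutations"
begin

definition tr :: "nat \<Rightarrow> nat \<Rightarrow> nat" where "tr i = Transposition.transpose i (Suc i)"

definition cyci :: "nat \<Rightarrow> nat \<Rightarrow> nat \<Rightarrow> nat" where
  "cyci n k x = (if x = k then n else if k < x \<and> x \<le> n then x - 1 else x)"
definition cyc :: "nat \<Rightarrow> nat \<Rightarrow> nat \<Rightarrow> nat" where
  "cyc n k x = (if x = n then k else if k \<le> x \<and> x < n then Suc x else x)"

lemma cyc_cyci: "k \<le> n \<Longrightarrow> cyc n k \<circ> cyci n k = id"
  by (auto simp: fun_eq_iff cyc_def cyci_def)
lemma cyci_cyc: "k \<le> n \<Longrightarrow> cyci n k \<circ> cyc n k = id"
  by (auto simp: fun_eq_iff cyc_def cyci_def)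
lemma cyc_step: "k < n \<Longrightarrow> cyc n k = tr k \<circ> cyc n (Suc k)"
  by (auto simp: fun_eq_iff cyc_def tr_def Transposition.transpose_def)
lemma cyc_nn: "cyc n n = id" by (auto simp: fun_eq_iff cyc_def)
lemma cyci_nn: "cyci n n = id" by (auto simp: fun_eq_iff cyci_def)

lemma cyci_permutes: "1 \<le> k \<Longrightarrow> k \<le> n \<Longrightarrow> cyci n k permutes {1..n}"
proof (rule bij_imp_permutes)
  assume a: "1 \<le> k" "k \<le> n"
  show "bij_betw (cyci n k) {1..n} {1..n}"
    apply (rule bij_betw_byWitness[where f'="cyc n k"])
    using a by (auto simp: cyc_def cyci_def)
  show "\<And>x. x \<notin> {1..n} \<Longrightarrow> cyci n k x = x" using a by (auto simp: cyci_def)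
qed

lemma tr_permutes: "1 \<le> i \<Longrightarrow> i < n \<Longrightarrow> tr i permutes {1..n}"
  unfolding tr_def by (rule permutes_swap_id) auto

lemma f1: "Suc i < k \<Longrightarrow> k \<le> m \<Longrightarrow> cyci m k \<circ> tr i = tr i \<circ> cyci m k"
  by (auto simp: fun_eq_iff cyci_def tr_def Transposition.transpose_def)
lemma f2: "2 \<le> k \<Longrightarrow> k \<le> m \<Longrightarrow> cyci m (k-1) \<circ> tr (k-1) = cyci m k"
  by (auto simp: fun_eq_iff cyci_def tr_def Transposition.transpose_def)
lemma f3: "k < m \<Longrightarrow> cyci m (Suc k) \<circ> tr k = cyci m k"
  by (auto simp: fun_eq_iff cyci_def tr_def Transposition.transpose_def)
lemma f4: "k < i \<Longrightarrow> Suc i \<le> m \<Longrightarrow> cyci m k \<circ> tr i = tr (i-1) \<circ> cyci m k"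
  by (auto simp: fun_eq_iff cyci_def tr_def Transposition.transpose_def)

function CA :: "(nat \<Rightarrow> 'a::ring_1) \<Rightarrow> nat \<Rightarrow> nat \<Rightarrow> 'a" where
  "CA S n k = (if k < n then CA S n (Suc k) * S k else 1)"
  by auto
termination by (relation "measure (\<lambda>(S,n,k). n - k)") auto
declare CA.simps[simp del]

primrec NFS :: "(nat \<Rightarrow> 'a::ring_1) \<Rightarrow> nat \<Rightarrow> (nat \<Rightarrow> nat) \<Rightarrow> 'a" where
  "NFS S 0 \<sigma> = 1"
| "NFS S (Suc n) \<sigma> = NFS S n (cyci (Suc n) (\<sigma> (Suc n)) \<circ> \<sigma>) * CA S (Suc n) (\<sigma> (Suc n))"

lemma perm_red:
  assumes "\<sigma> permutes {1..Suc n}"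
  shows "cyci (Suc n) (\<sigma> (Suc n)) \<circ> \<sigma> permutes {1..n}" "1 \<le> \<sigma> (Suc n)" "\<sigma> (Suc n) \<le> Suc n"
proof -
  have k: "\<sigma> (Suc n) \<in> {1..Suc n}" using permutes_in_image[OF assms] by simp
  then show "1 \<le> \<sigma> (Suc n)" "\<sigma> (Suc n) \<le> Suc n" by auto
  have p: "cyci (Suc n) (\<sigma> (Suc n)) \<circ> \<sigma> permutes {1..Suc n}"
    using permutes_compose[OF assms cyci_permutes] k by auto
  show "cyci (Suc n) (\<sigma> (Suc n)) \<circ> \<sigma> permutes {1..n}"
  proof (rule permutes_superset[OF p])
    fix x assume "x \<in> {1..Suc n} - {1..n}"
    then have "x = Suc n" by auto
    then show "(cyci (Suc n) (\<sigma> (Suc n)) \<circ> \<sigma>) x = x" by (simp add: cyci_def)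
  qed
qed

fun wp :: "nat list \<Rightarrow> (nat \<Rightarrow> nat) \<Rightarrow> (nat \<Rightarrow> nat)" where
  "wp [] g = g"
| "wp (i # ws) g = wp ws (tr i \<circ> g)"

lemma wp_comp: "wp ws g = wp ws id \<circ> g"
proof (induction ws arbitrary: g)
  case Nil then show ?case by simp
next
  case (Cons i ws)
  have "wp (i # ws) g = wp ws id \<circ> (tr i \<circ> g)" using Cons[of "tr i \<circ> g"] by (simp only: wp.simps)
  moreover have "wp (i # ws) id = wp ws id \<circ> tr i" using Cons[of "tr i"] by (simp only: wp.simps comp_id)
  ultimately show ?case by (simp only: o_assoc)
qed

lemma wp_append: "wp (xs @ ys) g = wp ys (wp xs g)"
  by (induction xs arbitrary: g) auto

lemma cyc_word: "k \<le> m \<Longrightarrow> wp (rev [k..<m]) g = cyc m k \<circ> g"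
proof (induction "m - k" arbitrary: k)
  case 0 then show ?case by (simp add: cyc_nn)
next
  case (Suc d)
  then have km: "k < m" by simp
  have "rev [k..<m] = rev [Suc k..<m] @ [k]" using km by (simp add: upt_conv_Cons)
  then have "wp (rev [k..<m]) g = tr k \<circ> (cyc m (Suc k) \<circ> g)"
    using Suc km by (simp add: wp_append)
  then show ?case using cyc_step[OF km] by (simp add: o_assoc)
qed

lemma gen: "\<sigma> permutes {1..n} \<Longrightarrow> \<exists>ws. set ws \<subseteq> {1..<n} \<and> \<sigma> = wp ws id"
proof (induction n arbitrary: \<sigma>)
  case 0
  then have "\<sigma> = id" by (simp add: permutes_empty)
  then show ?case by (intro exI[of _ "[]"]) simp
next
  case (Suc n)
  define m where "m = Suc n"
  define k where "k = \<sigma> m"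
  note pr = perm_red[OF Suc.prems, folded m_def, folded k_def]
  obtain ws where ws: "set ws \<subseteq> {1..<n}" "cyci m k \<circ> \<sigma> = wp ws id"
    using Suc.IH[OF pr(1)] by blast
  have "\<sigma> = cyc m k \<circ> (cyci m k \<circ> \<sigma>)" using cyc_cyci[OF pr(3)] by (simp add: o_assoc)
  also have "\<dots> = wp (ws @ rev [k..<m]) id"
    using cyc_word[OF pr(3), of "cyci m k \<circ> \<sigma>"] ws by (simp only: wp_append)
  moreover have "set (ws @ rev [k..<m]) \<subseteq> {1..<Suc n}" using ws(1) pr(2) by (auto simp: m_def)
  ultimately have "set (ws @ rev [k..<m]) \<subseteq> {1..<Suc n} \<and> \<sigma> = wp (ws @ rev [k..<m]) id" by (simp only: conj_commute)
  then show ?case by (rule exI)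
qed

locale coxS =
  fixes r :: nat and S :: "nat \<Rightarrow> 'a::ring_1"
  assumes sq: "\<And>i. 1 \<le> i \<Longrightarrow> i < r \<Longrightarrow> S i * S i = 1"
    and braid: "\<And>i. 1 \<le> i \<Longrightarrow> Suc i < r \<Longrightarrow> S i * S (Suc i) * S i = S (Suc i) * S i * S (Suc i)"
    and far: "\<And>i j. 1 \<le> i \<Longrightarrow> i < r \<Longrightarrow> 1 \<le> j \<Longrightarrow> j < r \<Longrightarrow> Suc i < j \<Longrightarrow> S i * S j = S j * S i"
begin

lemma CA_comm: "Suc j < k \<Longrightarrow> 1 \<le> j \<Longrightarrow> m \<le> r \<Longrightarrow> CA S m k * S j = S j * CA S m k"
proof (induction "m - k" arbitrary: k)
  case 0
  then show ?case by (simp add: CA.simps)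
next
  case (Suc d)
  then have km: "k < m" by simp
  have "CA S m k * S j = CA S m (Suc k) * (S k * S j)" by (simp add: CA.simps[of S m k] km mult.assoc)
  also have "S k * S j = S j * S k" using far[of j k] Suc km by auto
  also have "CA S m (Suc k) * (S j * S k) = (CA S m (Suc k) * S j) * S k" by (simp add: mult.assoc)
  also have "CA S m (Suc k) * S j = S j * CA S m (Suc k)" using Suc by simp
  finally show ?case by (simp add: CA.simps[of S m k] km mult.assoc)
qed

lemma CA_braid: "k < i \<Longrightarrow> i < m \<Longrightarrow> 1 \<le> k \<Longrightarrow> m \<le> r \<Longrightarrow> CA S m k * S i = S (i - 1) * CA S m k"
proof (induction "m - k" arbitrary: k)
  case 0
  then show ?case by simp
next
  case (Suc d)
  then have km: "k < m" by simp
  show ?case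
  proof (cases "i = Suc k")
    case True
    have e1: "CA S m k = CA S m (Suc (Suc k)) * S (Suc k) * S k"
      using Suc True by (simp add: CA.simps[of S m k] CA.simps[of S m "Suc k"])
    have "CA S m k * S i = CA S m (Suc (Suc k)) * (S (Suc k) * S k * S (Suc k))"
      by (simp add: e1 True mult.assoc)
    also have "S (Suc k) * S k * S (Suc k) = S k * S (Suc k) * S k" using braid[of k] Suc True by simp
    also have "CA S m (Suc (Suc k)) * (S k * S (Suc k) * S k) = (CA S m (Suc (Suc k)) * S k) * S (Suc k) * S k"
      by (simp add: mult.assoc)
    also have "CA S m (Suc (Suc k)) * S k = S k * CA S m (Suc (Suc k))" using CA_comm[of k "Suc (Suc k)" m] Suc by simp
    finally show ?thesis by (simp add: e1 True mult.assoc)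
  next
    case False
    then have ki: "Suc k < i" using Suc by simp
    have "CA S m k * S i = CA S m (Suc k) * (S k * S i)" by (simp add: CA.simps[of S m k] km mult.assoc)
    also have "S k * S i = S i * S k" using far[of k i] Suc ki by auto
    also have "CA S m (Suc k) * (S i * S k) = (CA S m (Suc k) * S i) * S k" by (simp add: mult.assoc)
    also have "CA S m (Suc k) * S i = S (i - 1) * CA S m (Suc k)" using Suc ki by simp
    finally show ?thesis by (simp add: CA.simps[of S m k] km mult.assoc)
  qed
qed

lemma KS: "n \<le> r \<Longrightarrow> \<sigma> permutes {1..n} \<Longrightarrow> 1 \<le> i \<Longrightarrow> i < n \<Longrightarrow> NFS S n \<sigma> * S i = NFS S n (tr i \<circ> \<sigma>)"
proof (induction n arbitrary: \<sigma> i)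
  case 0
  then show ?case by simp
next
  case (Suc n)
  define m where "m = Suc n"
  define k where "k = \<sigma> m"
  note pr = perm_red[OF Suc.prems(2), folded m_def, folded k_def]
  define \<sigma>' where "\<sigma>' = cyci m k \<circ> \<sigma>"
  have p': "\<sigma>' permutes {1..n}" using pr unfolding \<sigma>'_def by simp
  have lhs: "NFS S m \<sigma> * S i = NFS S n \<sigma>' * (CA S m k * S i)"
    by (simp add: m_def k_def \<sigma>'_def mult.assoc)
  have tm: "(tr i \<circ> \<sigma>) m = tr i k" by (simp add: k_def)
  have rhs: "NFS S m (tr i \<circ> \<sigma>) = NFS S n (cyci m (tr i k) \<circ> tr i \<circ> \<sigma>) * CA S m (tr i k)"
    using tm by (simp add: m_def o_assoc)
  consider "Suc i < k" | "Suc i = k" | "i = k" | "k < i" by linarith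
  then show ?case
  proof cases
    case 1
    have t: "tr i k = k" using 1 by (simp add: tr_def)
    have "cyci m k \<circ> tr i \<circ> \<sigma> = tr i \<circ> \<sigma>'"
      using f1[of i k m] 1 pr by (simp add: \<sigma>'_def o_assoc)
    then have "NFS S m (tr i \<circ> \<sigma>) = NFS S n (tr i \<circ> \<sigma>') * CA S m k" using rhs t by simp
    also have "NFS S n (tr i \<circ> \<sigma>') = NFS S n \<sigma>' * S i" using Suc.IH[OF _ p', of i] Suc.prems 1 pr by (simp add: m_def comp_def)
    also have "NFS S n \<sigma>' * S i * CA S m k = NFS S n \<sigma>' * (CA S m k * S i)"
      using CA_comm[of i k m] 1 Suc.prems by (simp add: mult.assoc m_def)
    finally show ?thesis using lhs unfolding m_def[symmetric] by simp
  next
    case 2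
    have t: "tr i k = i" using 2 by (simp add: tr_def)
    have "cyci m i \<circ> tr i \<circ> \<sigma> = \<sigma>'"
      using f2[of k m] 2[symmetric] pr Suc.prems by (simp add: \<sigma>'_def o_assoc)
    then have "NFS S m (tr i \<circ> \<sigma>) = NFS S n \<sigma>' * CA S m i" using rhs t by simp
    moreover have "CA S m k * S i = CA S m i" using 2 pr
      by (simp add: CA.simps[of S m i])
    ultimately show ?thesis using lhs unfolding m_def[symmetric] by metis
  next
    case 3
    have t: "tr i k = Suc k" using 3 by (simp add: tr_def)
    have km: "k < m" using 3 Suc.prems by (simp add: m_def)
    have "cyci m (Suc k) \<circ> tr i \<circ> \<sigma> = \<sigma>'"
      using f3[OF km] 3 by (simp add: \<sigma>'_def o_assoc)
    then have "NFS S m (tr i \<circ> \<sigma>) = NFS S n \<sigma>' * CA S m (Suc k)" using rhs t by simp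
    have e: "CA S m k = CA S m (Suc k) * S k" using km by (simp add: CA.simps[of S m k])
    have "S k * S k = 1" using sq[of k] 3 Suc.prems by (simp add: m_def)
    then have "CA S m k * S i = CA S m (Suc k)" using 3 e
      by (simp add: mult.assoc)
    then show ?thesis using lhs \<open>NFS S m (tr i \<circ> \<sigma>) = NFS S n \<sigma>' * CA S m (Suc k)\<close> unfolding m_def[symmetric] by metis
  next
    case 4
    have t: "tr i k = k" using 4 by (simp add: tr_def)
    have "cyci m k \<circ> tr i \<circ> \<sigma> = tr (i - 1) \<circ> \<sigma>'"
      using f4[of k i m] 4 Suc.prems by (simp add: \<sigma>'_def o_assoc m_def)
    then have "NFS S m (tr i \<circ> \<sigma>) = NFS S n (tr (i - 1) \<circ> \<sigma>') * CA S m k" using rhs t by simp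
    also have "NFS S n (tr (i - 1) \<circ> \<sigma>') = NFS S n \<sigma>' * S (i - 1)" using Suc.IH[OF _ p', of "i - 1"] Suc.prems 4 pr by (simp add: m_def comp_def)
    also have "NFS S n \<sigma>' * S (i - 1) * CA S m k = NFS S n \<sigma>' * (CA S m k * S i)"
      using CA_braid[of k i m] 4 Suc.prems pr by (simp add: mult.assoc m_def)
    finally show ?thesis using lhs unfolding m_def[symmetric] by simp
  qed
qed

lemma NFS_id: "NFS S n id = 1"
  by (induction n) (simp_all add: cyci_nn CA.simps)

lemma foldl_S: "foldl (\<lambda>a i. a * S i) x ws = x * foldl (\<lambda>a i. a * S i) 1 ws"
proof (induction ws arbitrary: x)
  case Nil then show ?case by simp
next
  case (Cons i ws)
  show ?case using Cons[of "x * S i"] Cons[of "S i"] by (simp add: mult.assoc)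
qed

lemma NFS_word: "set ws \<subseteq> {1..<r} \<Longrightarrow> \<sigma> permutes {1..r} \<Longrightarrow>
   NFS S r (wp ws \<sigma>) = foldl (\<lambda>a i. a * S i) (NFS S r \<sigma>) ws"
proof (induction ws arbitrary: \<sigma>)
  case Nil then show ?case by simp
next
  case (Cons i ws)
  have p: "tr i \<circ> \<sigma> permutes {1..r}" using Cons.prems permutes_compose[OF Cons.prems(2) tr_permutes[of i r]] by auto
  have "NFS S r (tr i \<circ> \<sigma>) = NFS S r \<sigma> * S i" using KS[of r \<sigma> i] Cons.prems by auto
  moreover have "NFS S r (wp (i # ws) \<sigma>) = NFS S r (wp ws (tr i \<circ> \<sigma>))" by (simp only: wp.simps)
  moreover have "NFS S r (wp ws (tr i \<circ> \<sigma>)) = foldl (\<lambda>a i. a * S i) (NFS S r (tr i \<circ> \<sigma>)) ws"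
    by (rule Cons.IH[OF _ p]) (use Cons.prems in auto)
  ultimately show ?case by simp
qed

lemma NFS_hom: "\<sigma> permutes {1..r} \<Longrightarrow> \<tau> permutes {1..r} \<Longrightarrow> NFS S r (\<tau> \<circ> \<sigma>) = NFS S r \<sigma> * NFS S r \<tau>"
proof -
  assume s: "\<sigma> permutes {1..r}" and t: "\<tau> permutes {1..r}"
  obtain ws where ws: "set ws \<subseteq> {1..<r}" "\<tau> = wp ws id" using gen[OF t] by blast
  have "NFS S r (\<tau> \<circ> \<sigma>) = NFS S r (wp ws \<sigma>)" using ws(2) wp_comp[of ws \<sigma>] by (simp only:)
  also have "\<dots> = NFS S r \<sigma> * foldl (\<lambda>a i. a * S i) 1 ws" using NFS_word[OF ws(1) s] foldl_S[of "NFS S r \<sigma>"] by (simp only:)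
  also have "NFS S r \<tau> = foldl (\<lambda>a i. a * S i) 1 ws" using NFS_word[OF ws(1) permutes_id] ws(2) by (simp only: NFS_id)
  ultimately show ?thesis by simp
qed

lemma NFS_tr: "1 \<le> i \<Longrightarrow> i < r \<Longrightarrow> NFS S r (tr i) = S i"
  using KS[of r id i] by (simp add: NFS_id permutes_id)

end

lemma transpose_step: "a < b \<Longrightarrow> Transposition.transpose a (Suc b) = tr b \<circ> Transposition.transpose a b \<circ> tr b"
  by (auto simp: fun_eq_iff tr_def Transposition.transpose_def)

locale rook = coxS r S for r :: nat and S :: "nat \<Rightarrow> 'a::ring_1" +
  fixes P :: "nat \<Rightarrow> 'a" and \<iota> :: "complex \<Rightarrow> 'a" and z :: complex
  assumes Psq: "\<And>j. 1 \<le> j \<Longrightarrow> j \<le> r \<Longrightarrow> P j * P j = \<iota> z * P j"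
    and Pcomm: "\<And>i j. 1 \<le> i \<Longrightarrow> i \<le> r \<Longrightarrow> 1 \<le> j \<Longrightarrow> j \<le> r \<Longrightarrow> P i * P j = P j * P i"
    and SPP: "\<And>i. 1 \<le> i \<Longrightarrow> i < r \<Longrightarrow> S i * (P i * P (Suc i)) = P i * P (Suc i)"
    and SPS: "\<And>i. 1 \<le> i \<Longrightarrow> i < r \<Longrightarrow> S i * P i * S i = P (Suc i)"
    and SPfar: "\<And>i j. 1 \<le> i \<Longrightarrow> i < r \<Longrightarrow> 1 \<le> j \<Longrightarrow> j \<le> r \<Longrightarrow> j \<noteq> i \<Longrightarrow> j \<noteq> Suc i \<Longrightarrow> S i * P j = P j * S i"
    and ca: "cplx_alg \<iota>"
begin

abbreviation "Phi \<equiv> NFS S r"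

lemma iota_add: "\<iota> (a + b) = \<iota> a + \<iota> b" using ca unfolding cplx_alg_def by blast
lemma iota_mult: "\<iota> (a * b) = \<iota> a * \<iota> b" using ca unfolding cplx_alg_def by blast
lemma iota_one: "\<iota> 1 = 1" using ca unfolding cplx_alg_def by blast
lemma iota_central: "\<iota> a * x = x * \<iota> a" using ca unfolding cplx_alg_def by blast
lemma iota_zero: "\<iota> 0 = 0" using iota_add[of 0 0] by simp

lemma PS_conj: "1 \<le> a \<Longrightarrow> a \<le> r \<Longrightarrow> 1 \<le> i \<Longrightarrow> i < r \<Longrightarrow> P a * S i = S i * P (tr i a)"
proof -
  assume a: "1 \<le> a" "a \<le> r" and i: "1 \<le> i" "i < r"
  have sq': "S i * S i = 1" using sq i by simp
  consider "a = i" | "a = Suc i" | "a \<noteq> i \<and> a \<noteq> Suc i" by blast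
  then show ?thesis
  proof cases
    case 1
    have "S i * (S i * P i * S i) = S i * P (Suc i)" using SPS[OF i] by simp
    then have "P i * S i = S i * P (Suc i)" by (simp add: mult.assoc[symmetric] sq')
    then show ?thesis using 1 by (simp add: tr_def)
  next
    case 2
    have "(S i * P i * S i) * S i = P (Suc i) * S i" using SPS[OF i] by simp
    then have "S i * P i = P (Suc i) * S i" by (simp add: mult.assoc sq')
    then show ?thesis using 2 by (simp add: tr_def)
  next
    case 3
    then show ?thesis using SPfar[OF i a] by (simp add: tr_def)
  qed
qed

lemma P_Phi: "\<sigma> permutes {1..r} \<Longrightarrow> 1 \<le> a \<Longrightarrow> a \<le> r \<Longrightarrow> P a * Phi \<sigma> = Phi \<sigma> * P (\<sigma> a)"
proof -
  assume s: "\<sigma> permutes {1..r}" and a: "1 \<le> a" "a \<le> r"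
  obtain ws where ws: "set ws \<subseteq> {1..<r}" "\<sigma> = wp ws id" using gen[OF s] by blast
  have "\<forall>g. g permutes {1..r} \<longrightarrow> (\<forall>a. 1 \<le> a \<longrightarrow> a \<le> r \<longrightarrow> P a * Phi g = Phi g * P (g a)) \<longrightarrow>
        (\<forall>a. 1 \<le> a \<longrightarrow> a \<le> r \<longrightarrow> P a * Phi (wp ws g) = Phi (wp ws g) * P (wp ws g a))"
    using ws(1)
  proof (induction ws)
    case Nil then show ?case by simp
  next
    case (Cons i ws)
    show ?case
    proof (intro allI impI)
      fix g b assume g: "g permutes {1..r}" and H: "\<forall>a. 1 \<le> a \<longrightarrow> a \<le> r \<longrightarrow> P a * Phi g = Phi g * P (g a)"
        and b: "1 \<le> b" "b \<le> r"
      have i: "1 \<le> i" "i < r" using Cons.prems by auto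
      have g': "tr i \<circ> g permutes {1..r}" using permutes_compose[OF g tr_permutes[OF i]] .
      have H': "\<forall>a. 1 \<le> a \<longrightarrow> a \<le> r \<longrightarrow> P a * Phi (tr i \<circ> g) = Phi (tr i \<circ> g) * P ((tr i \<circ> g) a)"
      proof (intro allI impI)
        fix a assume a: "1 \<le> a" "a \<le> r"
        have ga: "1 \<le> g a" "g a \<le> r" using permutes_in_image[OF g, of a] a by auto
        have "Phi (tr i \<circ> g) = Phi g * S i" using NFS_hom[OF g tr_permutes[OF i]] NFS_tr[OF i] by simp
        then have "P a * Phi (tr i \<circ> g) = (P a * Phi g) * S i" by (simp add: mult.assoc)
        also have "\<dots> = Phi g * (P (g a) * S i)" using H a by (simp add: mult.assoc)
        also have "\<dots> = Phi g * S i * P (tr i (g a))" using PS_conj[OF ga i] by (simp add: mult.assoc)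
        finally show "P a * Phi (tr i \<circ> g) = Phi (tr i \<circ> g) * P ((tr i \<circ> g) a)"
          using \<open>Phi (tr i \<circ> g) = Phi g * S i\<close> by simp
      qed
      have "set ws \<subseteq> {1..<r}" using Cons.prems by auto
      then show "P b * Phi (wp (i # ws) g) = Phi (wp (i # ws) g) * P (wp (i # ws) g b)"
      proof -
        have "P b * Phi (wp ws (tr i \<circ> g)) = Phi (wp ws (tr i \<circ> g)) * P (wp ws (tr i \<circ> g) b)"
          using Cons.IH[OF \<open>set ws \<subseteq> {1..<r}\<close>] g' H' b by blast
        then show ?thesis by (simp only: wp.simps)
      qed
    qed
  qed
  then have "P a * Phi (wp ws id) = Phi (wp ws id) * P (wp ws id a)"
    using a permutes_id[of "{1..r}"] by (simp add: NFS_id)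
  then show ?thesis using ws(2) by (simp only:)
qed

definition prl :: "nat list \<Rightarrow> 'a" where "prl xs = foldr (\<lambda>j a. P j * a) xs 1"
definition Q :: "nat set \<Rightarrow> 'a" where "Q T = prl (sorted_list_of_set T)"

lemma prl_insort: "set xs \<subseteq> {1..r} \<Longrightarrow> 1 \<le> x \<Longrightarrow> x \<le> r \<Longrightarrow> prl (insort x xs) = P x * prl xs"
proof (induction xs)
  case Nil then show ?case by (simp add: prl_def)
next
  case (Cons y ys)
  show ?case
  proof (cases "x \<le> y")
    case True then show ?thesis by (simp add: prl_def)
  next
    case False
    have "prl (insort x (y # ys)) = P y * (P x * prl ys)" using False Cons by (simp add: prl_def)
    also have "\<dots> = (P y * P x) * prl ys" by (simp add: mult.assoc)
    also have "P y * P x = P x * P y" using Pcomm[of y x] Cons.prems by auto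
    finally show ?thesis by (simp add: prl_def mult.assoc)
  qed
qed

lemma Q_empty: "Q {} = 1" by (simp add: Q_def prl_def)

lemma Q_insert: "finite T \<Longrightarrow> T \<subseteq> {1..r} \<Longrightarrow> 1 \<le> x \<Longrightarrow> x \<le> r \<Longrightarrow> x \<notin> T \<Longrightarrow> Q (insert x T) = P x * Q T"
  unfolding Q_def by (simp add: sorted_list_of_set_insert prl_insort)

lemma PQ_comm: "finite T \<Longrightarrow> T \<subseteq> {1..r} \<Longrightarrow> 1 \<le> x \<Longrightarrow> x \<le> r \<Longrightarrow> P x * Q T = Q T * P x"
proof (induction T rule: finite_induct)
  case empty then show ?case by (simp add: Q_empty)
next
  case (insert y T)
  have y: "1 \<le> y" "y \<le> r" using insert by auto
  have "P x * Q (insert y T) = (P x * P y) * Q T" using Q_insert[OF insert(1) _ y insert(2)] insert by (simp add: mult.assoc)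
  also have "P x * P y = P y * P x" using Pcomm y insert by auto
  also have "P y * P x * Q T = P y * Q T * P x" using insert by (simp add: mult.assoc)
  finally show ?case using Q_insert[OF insert(1) _ y insert(2)] insert by simp
qed

lemma PQ_in: "finite T \<Longrightarrow> T \<subseteq> {1..r} \<Longrightarrow> x \<in> T \<Longrightarrow> P x * Q T = \<iota> z * Q T"
proof -
  assume T: "finite T" "T \<subseteq> {1..r}" "x \<in> T"
  then have x: "1 \<le> x" "x \<le> r" by auto
  have "T - {x} \<subseteq> {1..r}" using T by auto
  then have e: "Q T = P x * Q (T - {x})" using Q_insert[of "T - {x}" x] T x by (simp add: insert_absorb)
  have "P x * Q T = (P x * P x) * Q (T - {x})" by (simp add: e mult.assoc)
  also have "\<dots> = \<iota> z * Q T" using Psq[OF x] e by (simp add: mult.assoc)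
  finally show ?thesis .
qed

lemma Q_mult: "finite A \<Longrightarrow> A \<subseteq> {1..r} \<Longrightarrow> finite B \<Longrightarrow> B \<subseteq> {1..r} \<Longrightarrow>
   Q A * Q B = \<iota> (z ^ card (A \<inter> B)) * Q (A \<union> B)"
proof (induction A rule: finite_induct)
  case empty then show ?case by (simp add: Q_empty iota_one)
next
  case (insert a A)
  have a: "1 \<le> a" "a \<le> r" using insert by auto
  have AB: "finite (A \<union> B)" "A \<union> B \<subseteq> {1..r}" using insert by auto
  have "Q (insert a A) * Q B = P a * (Q A * Q B)" using Q_insert[OF insert(1) _ a insert(2)] insert by (simp add: mult.assoc)
  also have "\<dots> = P a * (\<iota> (z ^ card (A \<inter> B)) * Q (A \<union> B))" using insert by simp
  also have "\<dots> = \<iota> (z ^ card (A \<inter> B)) * (P a * Q (A \<union> B))"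
  proof -
    have "P a * \<iota> (z ^ card (A \<inter> B)) = \<iota> (z ^ card (A \<inter> B)) * P a" by (rule iota_central[symmetric])
    then show ?thesis by (simp add: mult.assoc[symmetric])
  qed
  finally have e: "Q (insert a A) * Q B = \<iota> (z ^ card (A \<inter> B)) * (P a * Q (A \<union> B))" .
  show ?case
  proof (cases "a \<in> B")
    case True
    have "P a * Q (A \<union> B) = \<iota> z * Q (A \<union> B)" using PQ_in[OF AB] True by simp
    moreover have "card (insert a A \<inter> B) = Suc (card (A \<inter> B))" using True insert by simp
    moreover have "insert a A \<union> B = A \<union> B" using True by auto
    ultimately show ?thesis using e by (simp add: mult.assoc[symmetric] iota_mult[symmetric] mult.commute)
  next
    case False
    have "P a * Q (A \<union> B) = Q (insert a (A \<union> B))" using Q_insert[OF AB a] False insert by simp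
    moreover have "insert a A \<inter> B = A \<inter> B" using False by auto
    ultimately show ?thesis using e by simp
  qed
qed

lemma Q_Phi: "finite T \<Longrightarrow> T \<subseteq> {1..r} \<Longrightarrow> \<sigma> permutes {1..r} \<Longrightarrow> Q T * Phi \<sigma> = Phi \<sigma> * Q (\<sigma> ` T)"
proof (induction T rule: finite_induct)
  case empty then show ?case by (simp add: Q_empty)
next
  case (insert x T)
  have x: "1 \<le> x" "x \<le> r" using insert.prems by auto
  have sx: "1 \<le> \<sigma> x" "\<sigma> x \<le> r" using permutes_in_image[OF insert.prems(2), of x] x by auto
  have sT: "finite (\<sigma> ` T)" "\<sigma> ` T \<subseteq> {1..r}" using insert permutes_in_image[OF insert.prems(2)] by auto
  have nin: "\<sigma> x \<notin> \<sigma> ` T" using insert permutes_inj[OF insert.prems(2)] by (auto simp: inj_eq)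
  have "Q (insert x T) * Phi \<sigma> = P x * (Q T * Phi \<sigma>)" using Q_insert[OF insert(1) _ x insert(2)] insert by (simp add: mult.assoc)
  also have "\<dots> = (P x * Phi \<sigma>) * Q (\<sigma> ` T)" using insert by (simp add: mult.assoc)
  also have "\<dots> = Phi \<sigma> * (P (\<sigma> x) * Q (\<sigma> ` T))" using P_Phi[OF insert.prems(2) x] by (simp add: mult.assoc)
  also have "P (\<sigma> x) * Q (\<sigma> ` T) = Q (\<sigma> ` insert x T)" using Q_insert[OF sT sx nin] by simp
  finally show ?case .
qed

lemma TP: "1 \<le> a \<Longrightarrow> a < b \<Longrightarrow> b \<le> r \<Longrightarrow> Phi (Transposition.transpose a b) * (P a * P b) = P a * P b"
proof (induction b)
  case 0 then show ?case by simp
next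
  case (Suc b)
  show ?case
  proof (cases "b = a")
    case True
    then show ?thesis using NFS_tr[of a] SPP[of a] Suc.prems by (simp add: tr_def)
  next
    case False
    then have ab: "a < b" using Suc.prems by simp
    have b: "1 \<le> b" "b < r" using ab Suc.prems by auto
    let ?t = "Transposition.transpose a b"
    have tp: "?t permutes {1..r}" by (rule permutes_swap_id) (use ab Suc.prems in auto)
    have trp: "tr b permutes {1..r}" using tr_permutes[OF b] .
    have "Phi (Transposition.transpose a (Suc b)) = Phi (tr b \<circ> (?t \<circ> tr b))"
      using transpose_step[OF ab] by (simp add: o_assoc)
    also have "\<dots> = S b * Phi ?t * S b"
      using NFS_hom[OF permutes_compose[OF trp tp] trp] NFS_hom[OF trp tp] NFS_tr[OF b] by simp
    finally have e: "Phi (Transposition.transpose a (Suc b)) = S b * Phi ?t * S b" .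
    have c1: "S b * P a = P a * S b" using SPfar[OF b, of a] Suc.prems ab by auto
    have c2: "S b * P (Suc b) = P b * S b" using PS_conj[of b b] b by (simp add: tr_def)
    have "S b * Phi ?t * S b * (P a * P (Suc b)) = S b * Phi ?t * (S b * P a) * P (Suc b)" by (simp add: mult.assoc)
    also have "\<dots> = S b * Phi ?t * P a * (S b * P (Suc b))" by (simp add: c1 mult.assoc)
    also have "\<dots> = S b * (Phi ?t * (P a * P b)) * S b" by (simp add: c2 mult.assoc)
    also have "\<dots> = (S b * P a) * P b * S b" using Suc.IH ab b Suc.prems by (simp add: mult.assoc)
    also have "\<dots> = P a * (S b * P b * S b)" by (simp add: c1 mult.assoc)
    also have "\<dots> = P a * P (Suc b)" using SPS[OF b] by simp
    finally show ?thesis using e by simp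
  qed
qed

lemma perm_fix: "\<rho> permutes T \<Longrightarrow> T \<subseteq> {1..r} \<Longrightarrow> Phi \<rho> * Q T = Q T"
proof -
  assume p: "\<rho> permutes T" and T: "T \<subseteq> {1..r}"
  have fT: "finite T" using T finite_subset by blast
  from p fT show ?thesis
  proof (induction rule: permutes_induct)
    case id then show ?case using NFS_id[of r] by (simp add: id_def)
  next
    case (swap a b p)
    let ?t = "Transposition.transpose a b"
    have pp: "p permutes {1..r}" using swap T permutes_subset by blast
    have tp: "?t permutes {1..r}" by (rule permutes_swap_id) (use swap T in auto)
    have ab: "1 \<le> a" "a \<le> r" "1 \<le> b" "b \<le> r" using swap T by auto
    have T': "finite (T - {a, b})" "T - {a,b} \<subseteq> {1..r}" using fT T by auto
    have QT: "Q T = P a * (P b * Q (T - {a, b}))"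
    proof -
      have "insert a (insert b (T - {a, b})) = T" using swap by auto
      then have "Q T = Q (insert a (insert b (T - {a, b})))" by simp
      also have "\<dots> = P a * Q (insert b (T - {a, b}))" using Q_insert[of "insert b (T - {a,b})" a] T' ab swap by simp
      also have "Q (insert b (T - {a, b})) = P b * Q (T - {a,b})" using Q_insert[OF T'] ab by simp
      finally show ?thesis .
    qed
    have tab: "Phi ?t * (P a * P b) = P a * P b"
    proof (cases "a < b")
      case True then show ?thesis using TP ab by simp
    next
      case False
      then have "b < a" using swap by simp
      then show ?thesis using TP[of b a] ab Pcomm[of a b] by (simp add: transpose_commute)
    qed
    have "Phi (?t \<circ> p) * Q T = Phi p * (Phi ?t * (P a * P b)) * Q (T - {a,b})"
      using NFS_hom[OF pp tp] QT by (simp add: mult.assoc)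
    also have "\<dots> = Phi p * Q T" using tab QT by (simp add: mult.assoc)
    also have "\<dots> = Q T" using swap by simp
    finally show ?case .
  qed
qed

end

definition ext :: "nat \<Rightarrow> (nat \<rightharpoonup> nat) \<Rightarrow> (nat \<Rightarrow> nat)" where
  "ext r d = (SOME \<sigma>. \<sigma> permutes {1..r} \<and> (\<forall>x\<in>dom d. d x = Some (\<sigma> x)))"

lemma pperm_fin: "d \<in> pperm r \<Longrightarrow> finite (dom d) \<and> finite (ran d) \<and> dom d \<subseteq> {1..r} \<and> ran d \<subseteq> {1..r}"
  unfolding pperm_def using finite_subset by blast

lemma ext_ex: assumes d: "d \<in> pperm r" shows "\<exists>\<sigma>. \<sigma> permutes {1..r} \<and> (\<forall>x\<in>dom d. d x = Some (\<sigma> x))"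
proof -
  have sub: "dom d \<subseteq> {1..r}" "ran d \<subseteq> {1..r}" and inj: "inj_on d (dom d)" using d by (auto simp: pperm_def)
  define f where "f x = the (d x)" for x
  have fd: "\<And>x. x \<in> dom d \<Longrightarrow> d x = Some (f x)" by (auto simp: f_def)
  have bf: "bij_betw f (dom d) (ran d)"
  proof (rule bij_betw_imageI)
    show "inj_on f (dom d)"
    proof (rule inj_onI)
      fix x y assume "x \<in> dom d" "y \<in> dom d" "f x = f y"
      then have "d x = d y" using fd by metis
      then show "x = y" using inj \<open>x \<in> dom d\<close> \<open>y \<in> dom d\<close> by (auto dest: inj_onD)
    qed
    show "f ` dom d = ran d"
    proof
      show "f ` dom d \<subseteq> ran d" using fd by (auto simp: ran_def)
      show "ran d \<subseteq> f ` dom d"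
      proof
        fix y assume "y \<in> ran d"
        then obtain x where "d x = Some y" by (auto simp: ran_def)
        then have "x \<in> dom d" "f x = y" by (auto simp: f_def)
        then show "y \<in> f ` dom d" by blast
      qed
    qed
  qed
  have cd: "card (dom d) = card (ran d)" using bij_betw_same_card[OF bf] .
  have fin: "finite (dom d)" "finite (ran d)" using sub by (meson finite_atLeastAtMost finite_subset)+
  have "card ({1..r} - dom d) = card ({1..r} - ran d)"
    using card_Diff_subset[OF fin(1) sub(1)] card_Diff_subset[OF fin(2) sub(2)] cd by simp
  then obtain g where bg: "bij_betw g ({1..r} - dom d) ({1..r} - ran d)"
    using finite_same_card_bij by blast
  define \<sigma> where "\<sigma> x = (if x \<in> dom d then f x else if x \<in> {1..r} then g x else x)" for x
  have b1: "bij_betw \<sigma> (dom d) (ran d)" using bf by (rule bij_betw_cong[THEN iffD1, rotated]) (auto simp: \<sigma>_def)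
  have b2: "bij_betw \<sigma> ({1..r} - dom d) ({1..r} - ran d)" using bg by (rule bij_betw_cong[THEN iffD1, rotated]) (auto simp: \<sigma>_def)
  have "bij_betw \<sigma> (dom d \<union> ({1..r} - dom d)) (ran d \<union> ({1..r} - ran d))"
    by (rule bij_betw_combine[OF b1 b2]) auto
  moreover have "dom d \<union> ({1..r} - dom d) = {1..r}" "ran d \<union> ({1..r} - ran d) = {1..r}" using sub by auto
  ultimately have "bij_betw \<sigma> {1..r} {1..r}" by simp
  then have "\<sigma> permutes {1..r}" by (rule bij_imp_permutes) (use sub in \<open>auto simp: \<sigma>_def\<close>)
  moreover have "\<forall>x\<in>dom d. d x = Some (\<sigma> x)" using fd by (auto simp: \<sigma>_def)
  ultimately show ?thesis by blast
qed

lemma ext_prop: assumes "d \<in> pperm r" shows "ext r d permutes {1..r} \<and> (\<forall>x\<in>dom d. d x = Some (ext r d x))"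
  unfolding ext_def by (rule someI_ex[OF ext_ex[OF assms]])

lemma ran_ext: assumes "\<sigma> permutes {1..r}" "\<forall>x\<in>dom d. d x = Some (\<sigma> x)"
  shows "ran d = \<sigma> ` dom d"
proof
  show "ran d \<subseteq> \<sigma> ` dom d"
  proof
    fix y assume "y \<in> ran d"
    then obtain x where x: "d x = Some y" by (auto simp: ran_def)
    then have "x \<in> dom d" by auto
    then show "y \<in> \<sigma> ` dom d" using assms x by force
  qed
  show "\<sigma> ` dom d \<subseteq> ran d" using assms by (force simp: ran_def)
qed

lemma pcomp_pperm: assumes "d1 \<in> pperm r" "d2 \<in> pperm r" shows "pcomp d1 d2 \<in> pperm r"
proof -
  have "dom (d2 \<circ>\<^sub>m d1) \<subseteq> dom d1" by (auto simp: map_comp_def split: option.splits)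
  moreover have "ran (d2 \<circ>\<^sub>m d1) \<subseteq> ran d2" by (auto simp: map_comp_def ran_def split: option.splits)
  moreover have "inj_on (d2 \<circ>\<^sub>m d1) (dom (d2 \<circ>\<^sub>m d1))"
  proof (rule inj_onI)
    fix x y assume x: "x \<in> dom (d2 \<circ>\<^sub>m d1)" and y: "y \<in> dom (d2 \<circ>\<^sub>m d1)" and e: "(d2 \<circ>\<^sub>m d1) x = (d2 \<circ>\<^sub>m d1) y"
    obtain u where u: "d1 x = Some u" "u \<in> dom d2" using x by (metis domD domI map_comp_Some_iff)
    obtain v where v: "d1 y = Some v" "v \<in> dom d2" using y by (metis domD domI map_comp_Some_iff)
    have "d2 u = d2 v" using e u v by (simp add: map_comp_def)
    then have "u = v" using assms(2) u v by (auto simp: pperm_def dest: inj_onD)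
    then have "d1 x = d1 y" using u v by simp
    moreover have "inj_on d1 (dom d1)" using assms(1) by (simp add: pperm_def)
    ultimately show "x = y" using u v by (metis domI inj_onD)
  qed
  ultimately show ?thesis using assms by (auto simp: pperm_def pcomp_def)
qed

context rook begin

definition PHI :: "(nat \<rightharpoonup> nat) \<Rightarrow> 'a" where
  "PHI d = Phi (ext r d) * Q ({1..r} - ran d)"

lemma indep:
  assumes d: "d \<in> pperm r" and s: "\<sigma> permutes {1..r}" and e: "\<forall>x\<in>dom d. d x = Some (\<sigma> x)"
  shows "PHI d = Phi \<sigma> * Q ({1..r} - ran d)"
proof -
  define \<sigma>0 where "\<sigma>0 = ext r d"
  have s0: "\<sigma>0 permutes {1..r}" "\<forall>x\<in>dom d. d x = Some (\<sigma>0 x)" using ext_prop[OF d] by (auto simp: \<sigma>0_def)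
  define \<rho> where "\<rho> = \<sigma> \<circ> inv \<sigma>0"
  have rp: "\<rho> permutes {1..r}" unfolding \<rho>_def by (rule permutes_compose[OF permutes_inv[OF s0(1)] s])
  have "\<rho> \<circ> \<sigma>0 = \<sigma>" unfolding \<rho>_def by (simp add: o_assoc[symmetric] permutes_inv_o(2)[OF s0(1)])
  have rfix: "\<rho> y = y" if yr: "y \<in> ran d" for y
  proof -
    obtain x where x: "d x = Some y" using yr unfolding ran_def by blast
    then have "x \<in> dom d" by auto
    then have "\<sigma>0 x = y" "\<sigma> x = y" using s0 e x by auto
    then show ?thesis unfolding \<rho>_def using permutes_inverses(2)[OF s0(1), of x] by simp
  qed
  have rT: "\<rho> permutes ({1..r} - ran d)" by (rule permutes_superset[OF rp]) (use rfix in auto)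
  have "Phi \<sigma> * Q ({1..r} - ran d) = Phi \<sigma>0 * (Phi \<rho> * Q ({1..r} - ran d))"
    using NFS_hom[OF s0(1) rp] \<open>\<rho> \<circ> \<sigma>0 = \<sigma>\<close> by (simp add: mult.assoc)
  also have "Phi \<rho> * Q ({1..r} - ran d) = Q ({1..r} - ran d)" by (rule perm_fix[OF rT]) auto
  finally show ?thesis by (simp add: PHI_def \<sigma>0_def)
qed

lemma PHI_mult:
  assumes d1: "d1 \<in> pperm r" and d2: "d2 \<in> pperm r"
  shows "PHI d1 * PHI d2 = \<iota> (z ^ pexp r d1 d2) * PHI (pcomp d1 d2)"
proof -
  define \<sigma>1 where "\<sigma>1 = ext r d1"
  define \<sigma>2 where "\<sigma>2 = ext r d2"
  have s1: "\<sigma>1 permutes {1..r}" "\<forall>x\<in>dom d1. d1 x = Some (\<sigma>1 x)" using ext_prop[OF d1] by (auto simp: \<sigma>1_def)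
  have s2: "\<sigma>2 permutes {1..r}" "\<forall>x\<in>dom d2. d2 x = Some (\<sigma>2 x)" using ext_prop[OF d2] by (auto simp: \<sigma>2_def)
  have f1: "finite (dom d1)" "finite (ran d1)" "dom d1 \<subseteq> {1..r}" "ran d1 \<subseteq> {1..r}" using pperm_fin[OF d1] by auto
  have f2: "finite (dom d2)" "finite (ran d2)" "dom d2 \<subseteq> {1..r}" "ran d2 \<subseteq> {1..r}" using pperm_fin[OF d2] by auto
  define T1 where "T1 = {1..r} - ran d1"
  define T2 where "T2 = {1..r} - ran d2"
  define D2 where "D2 = {1..r} - dom d2"
  have inj2: "inj \<sigma>2" using permutes_inj[OF s2(1)] .
  have im2: "\<sigma>2 ` {1..r} = {1..r}" using permutes_image[OF s2(1)] .
  have rd2: "ran d2 = \<sigma>2 ` dom d2" using ran_ext[OF s2] .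
  have T2e: "T2 = \<sigma>2 ` D2" unfolding T2_def D2_def rd2 using image_set_diff[OF inj2] im2 by simp
  have "card (\<sigma>2 ` T1 \<inter> T2) = card (T1 \<inter> D2)"
    unfolding T2e image_Int[OF inj2, symmetric] by (rule card_image) (rule inj_on_subset[OF inj2], simp)
  also have "T1 \<inter> D2 = {1..r} - (ran d1 \<union> dom d2)" unfolding T1_def D2_def by auto
  also have "card \<dots> = r - card (ran d1 \<union> dom d2)" using f1 f2 by (subst card_Diff_subset) auto
  finally have cardeq: "card (\<sigma>2 ` T1 \<inter> T2) = pexp r d1 d2" by (simp add: pexp_def)
  have ranc: "ran (pcomp d1 d2) = \<sigma>2 ` (ran d1 \<inter> dom d2)"
  proof
    show "ran (pcomp d1 d2) \<subseteq> \<sigma>2 ` (ran d1 \<inter> dom d2)"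
    proof
      fix y assume "y \<in> ran (pcomp d1 d2)"
      then obtain x where "(d2 \<circ>\<^sub>m d1) x = Some y" by (auto simp: ran_def pcomp_def)
      then obtain u where u: "d1 x = Some u" "d2 u = Some y" by (auto simp: map_comp_Some_iff)
      then have "u \<in> ran d1" "u \<in> dom d2" by (auto simp: ran_def)
      moreover have "y = \<sigma>2 u" using s2 u \<open>u \<in> dom d2\<close> by auto
      ultimately show "y \<in> \<sigma>2 ` (ran d1 \<inter> dom d2)" by blast
    qed
    show "\<sigma>2 ` (ran d1 \<inter> dom d2) \<subseteq> ran (pcomp d1 d2)"
    proof
      fix y assume "y \<in> \<sigma>2 ` (ran d1 \<inter> dom d2)"
      then obtain u where u: "u \<in> ran d1" "u \<in> dom d2" "y = \<sigma>2 u" by blast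
      then obtain x where x: "d1 x = Some u" by (auto simp: ran_def)
      have "d2 u = Some y" using s2 u by auto
      then have "(d2 \<circ>\<^sub>m d1) x = Some y" using x by simp
      then show "y \<in> ran (pcomp d1 d2)" by (auto simp: ran_def pcomp_def)
    qed
  qed
  have Tc: "{1..r} - ran (pcomp d1 d2) = \<sigma>2 ` T1 \<union> T2"
  proof -
    have "{1..r} - ran (pcomp d1 d2) = \<sigma>2 ` ({1..r} - (ran d1 \<inter> dom d2))"
      unfolding ranc using image_set_diff[OF inj2] im2 by simp
    also have "{1..r} - (ran d1 \<inter> dom d2) = T1 \<union> D2" unfolding T1_def D2_def by auto
    finally show ?thesis using T2e by (simp add: image_Un)
  qed
  have extc: "\<forall>x\<in>dom (pcomp d1 d2). pcomp d1 d2 x = Some ((\<sigma>2 \<circ> \<sigma>1) x)"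
  proof
    fix x assume "x \<in> dom (pcomp d1 d2)"
    then obtain y where "(d2 \<circ>\<^sub>m d1) x = Some y" by (auto simp: pcomp_def)
    then obtain u where u: "d1 x = Some u" "d2 u = Some y" by (auto simp: map_comp_Some_iff)
    then have "u = \<sigma>1 x" "y = \<sigma>2 u" using s1 s2 by (metis domI option.inject)+
    then show "pcomp d1 d2 x = Some ((\<sigma>2 \<circ> \<sigma>1) x)" using u by (simp add: pcomp_def)
  qed
  have fT1: "finite T1" "T1 \<subseteq> {1..r}" "finite T2" "T2 \<subseteq> {1..r}" unfolding T1_def T2_def by auto
  have fsT1: "finite (\<sigma>2 ` T1)" "\<sigma>2 ` T1 \<subseteq> {1..r}" using fT1 im2 by auto
  have "PHI d1 * PHI d2 = Phi \<sigma>1 * (Q T1 * Phi \<sigma>2) * Q T2"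
    by (simp add: PHI_def \<sigma>1_def \<sigma>2_def T1_def T2_def mult.assoc)
  also have "\<dots> = Phi \<sigma>1 * Phi \<sigma>2 * (Q (\<sigma>2 ` T1) * Q T2)"
    using Q_Phi[OF fT1(1,2) s2(1)] by (simp add: mult.assoc)
  also have "\<dots> = Phi (\<sigma>2 \<circ> \<sigma>1) * (\<iota> (z ^ pexp r d1 d2) * Q (\<sigma>2 ` T1 \<union> T2))"
    using Q_mult[OF fsT1 fT1(3,4)] cardeq NFS_hom[OF s1(1) s2(1)] by simp
  also have "\<dots> = \<iota> (z ^ pexp r d1 d2) * (Phi (\<sigma>2 \<circ> \<sigma>1) * Q (\<sigma>2 ` T1 \<union> T2))"
  proof -
    have "Phi (\<sigma>2 \<circ> \<sigma>1) * \<iota> (z ^ pexp r d1 d2) = \<iota> (z ^ pexp r d1 d2) * Phi (\<sigma>2 \<circ> \<sigma>1)" by (rule iota_central[symmetric])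
    then show ?thesis by (simp add: mult.assoc[symmetric])
  qed
  also have "Phi (\<sigma>2 \<circ> \<sigma>1) * Q (\<sigma>2 ` T1 \<union> T2) = PHI (pcomp d1 d2)"
    using indep[OF pcomp_pperm[OF d1 d2] permutes_compose[OF s1(1) s2(1)] extc] Tc by (simp add: comp_def)
  finally show ?thesis .
qed

end

lemma finite_pperm: "finite (pperm r)"
proof -
  have "pperm r \<subseteq> (\<Union>A\<in>Pow {1..r}. {m. dom m = A \<and> ran m \<subseteq> {1..r}})" by (auto simp: pperm_def)
  moreover have "finite (\<Union>A\<in>Pow {1..r}. {m :: nat \<rightharpoonup> nat. dom m = A \<and> ran m \<subseteq> {1..r}})"
  proof (rule finite_UN_I)
    show "finite (Pow {1..r})" by simp
    fix A assume "A \<in> Pow {1..r}"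
    then have "finite A" using finite_subset by auto
    then show "finite {m :: nat \<rightharpoonup> nat. dom m = A \<and> ran m \<subseteq> {1..r}}"
      using finite_set_of_finite_maps[of A "{1..r}"] by simp
  qed
  ultimately show ?thesis by (rule finite_subset)
qed
definition tomap :: "nat \<Rightarrow> (nat \<Rightarrow> nat) \<Rightarrow> (nat \<rightharpoonup> nat)" where
  "tomap r \<sigma> = (\<lambda>x. if x \<in> {1..r} then Some (\<sigma> x) else None)"

lemma tomap_dom: "dom (tomap r \<sigma>) = {1..r}" by (auto simp: tomap_def split: if_splits)
lemma tomap_ran: assumes "\<sigma> permutes {1..r}" shows "ran (tomap r \<sigma>) = {1..r}"
proof (rule set_eqI)
  fix y show "y \<in> ran (tomap r \<sigma>) \<longleftrightarrow> y \<in> {1..r}"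
  proof
    assume "y \<in> ran (tomap r \<sigma>)"
    then obtain x where "tomap r \<sigma> x = Some y" unfolding ran_def by blast
    then have "x \<in> {1..r}" "y = \<sigma> x" unfolding tomap_def by (simp_all split: if_splits)
    then show "y \<in> {1..r}" using permutes_in_image[OF assms] by simp
  next
    assume y: "y \<in> {1..r}"
    have "inv \<sigma> y \<in> {1..r}" using permutes_in_image[OF permutes_inv[OF assms]] y by simp
    then have "tomap r \<sigma> (inv \<sigma> y) = Some y" unfolding tomap_def using permutes_inverses(1)[OF assms] by simp
    then show "y \<in> ran (tomap r \<sigma>)" unfolding ran_def by blast
  qed
qed
lemma tomap_pperm: assumes "\<sigma> permutes {1..r}" shows "tomap r \<sigma> \<in> pperm r"
proof -
  have "inj_on (tomap r \<sigma>) {1..r}"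
    by (rule inj_onI) (use permutes_inj[OF assms] in \<open>simp add: tomap_def inj_eq split: if_splits\<close>)
  then show ?thesis unfolding pperm_def mem_Collect_eq tomap_dom tomap_ran[OF assms] by simp
qed
lemma tomap_comp: assumes "\<sigma> permutes {1..r}" shows "pcomp (tomap r \<sigma>) (tomap r \<tau>) = tomap r (\<tau> \<circ> \<sigma>)"
proof
  fix x
  show "pcomp (tomap r \<sigma>) (tomap r \<tau>) x = tomap r (\<tau> \<circ> \<sigma>) x"
    using permutes_in_image[OF assms, of x] by (simp add: tomap_def pcomp_def map_comp_def)
qed
lemma sperm_tomap: "1 \<le> i \<Longrightarrow> i < r \<Longrightarrow> sperm r i = tomap r (tr i)"
  by (auto simp: fun_eq_iff sperm_def tomap_def tr_def Transposition.transpose_def)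
lemma pid_tomap: "pid r = tomap r id" by (auto simp: fun_eq_iff pid_def tomap_def)

lemma pproj_dom: "dom (pproj r j) = {1..r} - {j}" by (auto simp: pproj_def split: if_splits)
lemma pproj_ran: "ran (pproj r j) = {1..r} - {j}"
proof (rule set_eqI)
  fix y show "y \<in> ran (pproj r j) \<longleftrightarrow> y \<in> {1..r} - {j}"
  proof
    assume "y \<in> ran (pproj r j)"
    then obtain x where "pproj r j x = Some y" unfolding ran_def by blast
    then show "y \<in> {1..r} - {j}" unfolding pproj_def by (simp split: if_splits)
  next
    assume "y \<in> {1..r} - {j}"
    then have "pproj r j y = Some y" unfolding pproj_def by simp
    then show "y \<in> ran (pproj r j)" unfolding ran_def by blast
  qed
qed
lemma pproj_pperm: "pproj r j \<in> pperm r"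
proof -
  have "inj_on (pproj r j) ({1..r} - {j})" by (rule inj_onI) (simp add: pproj_def split: if_splits)
  then show ?thesis unfolding pperm_def mem_Collect_eq pproj_dom pproj_ran by simp
qed


lemma pexp0: "d1 \<in> pperm r \<Longrightarrow> d2 \<in> pperm r \<Longrightarrow> {1..r} \<subseteq> ran d1 \<union> dom d2 \<Longrightarrow> pexp r d1 d2 = 0"
proof -
  assume "d1 \<in> pperm r" "d2 \<in> pperm r" "{1..r} \<subseteq> ran d1 \<union> dom d2"
  then have "ran d1 \<union> dom d2 = {1..r}" by (auto simp: pperm_def)
  then show ?thesis by (simp add: pexp_def)
qed

lemma pmult_bas: assumes "d1 \<in> pperm r" "d2 \<in> pperm r"
  shows "pmult r z (bas d1) (bas d2) = (\<lambda>e. z ^ pexp r d1 d2 * bas (pcomp d1 d2) e)"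
proof
  fix e
  have "\<And>a b. (if pcomp a b = e then z ^ pexp r a b * bas d1 a * bas d2 b else 0) =
      (if a = d1 then (if b = d2 then (if pcomp d1 d2 = e then z ^ pexp r d1 d2 else 0) else 0) else 0)"
    by (simp add: bas_def)
  then have "pmult r z (bas d1) (bas d2) e = (\<Sum>a\<in>pperm r. \<Sum>b\<in>pperm r.
      (if a = d1 then (if b = d2 then (if pcomp d1 d2 = e then z ^ pexp r d1 d2 else 0) else 0) else 0))"
    by (simp add: pmult_def)
  also have "\<dots> = (\<Sum>a\<in>pperm r. (if a = d1 then (if pcomp d1 d2 = e then z ^ pexp r d1 d2 else 0) else 0))"
  proof (rule sum.cong[OF refl])
    fix a assume "a \<in> pperm r"
    show "(\<Sum>b\<in>pperm r. (if a = d1 then (if b = d2 then (if pcomp d1 d2 = e then z ^ pexp r d1 d2 else 0) else 0) else 0))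
      = (if a = d1 then (if pcomp d1 d2 = e then z ^ pexp r d1 d2 else 0) else 0)"
      using assms finite_pperm[of r] by (cases "a = d1") (simp_all add: sum.delta)
  qed
  also have "\<dots> = (if pcomp d1 d2 = e then z ^ pexp r d1 d2 else 0)"
    using assms finite_pperm[of r] by (simp add: sum.delta)
  finally show "pmult r z (bas d1) (bas d2) e = z ^ pexp r d1 d2 * bas (pcomp d1 d2) e"
    by (auto simp: bas_def)
qed

lemma pmult_bas0: "d1 \<in> pperm r \<Longrightarrow> d2 \<in> pperm r \<Longrightarrow> {1..r} \<subseteq> ran d1 \<union> dom d2 \<Longrightarrow>
  pmult r z (bas d1) (bas d2) = bas (pcomp d1 d2)"
  using pmult_bas[of d1 r d2 z] pexp0[of d1 r d2] by simp

lemma bas_PA: "d \<in> pperm r \<Longrightarrow> bas d \<in> PA r" by (auto simp: PA_def bas_def)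


context rook begin

definition phi :: "((nat \<rightharpoonup> nat) \<Rightarrow> complex) \<Rightarrow> 'a" where
  "phi f = (\<Sum>d\<in>pperm r. \<iota> (f d) * PHI d)"

lemma iota_sum: "\<iota> (sum f A) = (\<Sum>x\<in>A. \<iota> (f x))"
proof (cases "finite A")
  case True then show ?thesis by (induction A rule: finite_induct) (simp_all add: iota_zero iota_add)
next
  case False then show ?thesis by (simp add: iota_zero)
qed

lemma phi_add: "phi (\<lambda>e. f e + g e) = phi f + phi g"
  by (simp add: phi_def iota_add distrib_right sum.distrib)

lemma phi_smult: "phi (\<lambda>e. c * f e) = \<iota> c * phi f"
  by (simp add: phi_def iota_mult sum_distrib_left mult.assoc)

lemma phi_bas: "d \<in> pperm r \<Longrightarrow> phi (bas d) = PHI d"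
proof -
  assume d: "d \<in> pperm r"
  have "phi (bas d) = (\<Sum>e\<in>pperm r. if e = d then PHI e else 0)"
    unfolding phi_def by (rule sum.cong) (auto simp: bas_def iota_one iota_zero)
  also have "\<dots> = PHI d" using d finite_pperm[of r] by (simp add: sum.delta')
  finally show ?thesis .
qed


lemma term_eq: assumes "d1 \<in> pperm r" "d2 \<in> pperm r"
  shows "\<iota> a * PHI d1 * (\<iota> b * PHI d2) = \<iota> (z ^ pexp r d1 d2 * a * b) * PHI (pcomp d1 d2)"
proof -
  have "\<iota> a * PHI d1 * (\<iota> b * PHI d2) = \<iota> a * (PHI d1 * \<iota> b) * PHI d2" by (simp add: mult.assoc)
  also have "PHI d1 * \<iota> b = \<iota> b * PHI d1" by (rule iota_central[symmetric])
  also have "\<iota> a * (\<iota> b * PHI d1) * PHI d2 = \<iota> (a * b) * (PHI d1 * PHI d2)" by (simp add: iota_mult mult.assoc)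
  also have "\<dots> = \<iota> (a * b) * \<iota> (z ^ pexp r d1 d2) * PHI (pcomp d1 d2)" using PHI_mult[OF assms] by (simp add: mult.assoc)
  also have "\<dots> = \<iota> (z ^ pexp r d1 d2 * a * b) * PHI (pcomp d1 d2)" by (simp add: iota_mult[symmetric] mult_ac)
  finally show ?thesis .
qed

lemma phi_mult: "phi (pmult r z f g) = phi f * phi g"
proof -
  have "phi (pmult r z f g) = (\<Sum>e\<in>pperm r. \<Sum>d1\<in>pperm r. \<Sum>d2\<in>pperm r.
      (if pcomp d1 d2 = e then \<iota> (z ^ pexp r d1 d2 * f d1 * g d2) * PHI e else 0))"
    unfolding phi_def pmult_def
  proof (rule sum.cong[OF refl])
    fix e
    have "\<And>d1 d2. \<iota> (if pcomp d1 d2 = e then z ^ pexp r d1 d2 * f d1 * g d2 else 0) * PHI e =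
        (if pcomp d1 d2 = e then \<iota> (z ^ pexp r d1 d2 * f d1 * g d2) * PHI e else 0)"
      by (simp add: iota_zero)
    then show "\<iota> (\<Sum>d1\<in>pperm r. \<Sum>d2\<in>pperm r. if pcomp d1 d2 = e then z ^ pexp r d1 d2 * f d1 * g d2 else 0) * PHI e =
      (\<Sum>d1\<in>pperm r. \<Sum>d2\<in>pperm r. if pcomp d1 d2 = e then \<iota> (z ^ pexp r d1 d2 * f d1 * g d2) * PHI e else 0)"
      by (simp add: iota_sum sum_distrib_right)
  qed
  also have "\<dots> = (\<Sum>d1\<in>pperm r. \<Sum>d2\<in>pperm r. \<Sum>e\<in>pperm r.
      (if pcomp d1 d2 = e then \<iota> (z ^ pexp r d1 d2 * f d1 * g d2) * PHI e else 0))"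
    by (subst sum.swap) (rule sum.cong[OF refl], rule sum.swap)
  also have "\<dots> = (\<Sum>d1\<in>pperm r. \<Sum>d2\<in>pperm r. \<iota> (z ^ pexp r d1 d2 * f d1 * g d2) * PHI (pcomp d1 d2))"
    using finite_pperm[of r] pcomp_pperm by (simp add: sum.delta)
  also have "\<dots> = (\<Sum>d1\<in>pperm r. \<Sum>d2\<in>pperm r. \<iota> (f d1) * PHI d1 * (\<iota> (g d2) * PHI d2))"
    by (intro sum.cong refl) (simp add: term_eq)
  also have "\<dots> = phi f * phi g" unfolding phi_def by (simp add: sum_product)
  finally show ?thesis .
qed


end

definition pidY :: "nat \<Rightarrow> nat set \<Rightarrow> (nat \<rightharpoonup> nat)" where
  "pidY r T = (\<lambda>x. if x \<in> {1..r} \<and> x \<notin> T then Some x else None)"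

lemma pidY_dom: "dom (pidY r T) = {1..r} - T" by (auto simp: pidY_def split: if_splits)
lemma pidY_ran: "ran (pidY r T) = {1..r} - T"
proof (rule set_eqI)
  fix y show "y \<in> ran (pidY r T) \<longleftrightarrow> y \<in> {1..r} - T"
  proof
    assume "y \<in> ran (pidY r T)"
    then obtain x where "pidY r T x = Some y" unfolding ran_def by blast
    then show "y \<in> {1..r} - T" unfolding pidY_def by (simp split: if_splits)
  next
    assume "y \<in> {1..r} - T"
    then have "pidY r T y = Some y" unfolding pidY_def by simp
    then show "y \<in> ran (pidY r T)" unfolding ran_def by blast
  qed
qed
lemma pidY_pperm: "pidY r T \<in> pperm r"
proof -
  have "inj_on (pidY r T) ({1..r} - T)" by (rule inj_onI) (simp add: pidY_def split: if_splits)
  then show ?thesis unfolding pperm_def mem_Collect_eq pidY_dom pidY_ran by auto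
qed
lemma pidY_empty: "pidY r {} = pid r" by (auto simp: fun_eq_iff pidY_def pid_def)
lemma pidY_insert: "pidY r (insert j T) = pcomp (pproj r j) (pidY r T)"
  by (auto simp: fun_eq_iff pidY_def pproj_def pcomp_def map_comp_def)

lemma PA_sum: "(\<forall>d\<in>D. g d \<in> PA r) \<Longrightarrow> (\<lambda>e. \<Sum>d\<in>D. g d e) \<in> PA r"
  by (auto simp: PA_def)

lemma PA_decomp: "f \<in> PA r \<Longrightarrow> f = (\<lambda>e. \<Sum>d\<in>pperm r. f d * bas d e)"
proof
  fix e assume f: "f \<in> PA r"
  have "(\<Sum>d\<in>pperm r. f d * bas d e) = (\<Sum>d\<in>pperm r. if e = d then f e else 0)"
    by (rule sum.cong) (auto simp: bas_def)
  also have "\<dots> = (if e \<in> pperm r then f e else 0)" using finite_pperm[of r] by (simp add: sum.delta)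
  also have "\<dots> = f e" using f by (auto simp: PA_def)
  finally show "f e = (\<Sum>d\<in>pperm r. f d * bas d e)" by simp
qed

context rook begin

lemma Phi_id': "Phi (\<lambda>a. a) = 1" using NFS_id[of r] by (simp add: id_def)

lemma PHI_tomap: assumes s: "\<sigma> permutes {1..r}" shows "PHI (tomap r \<sigma>) = Phi \<sigma>"
proof -
  have "\<forall>x\<in>dom (tomap r \<sigma>). tomap r \<sigma> x = Some (\<sigma> x)" by (auto simp: tomap_dom) (simp add: tomap_def)
  then have "PHI (tomap r \<sigma>) = Phi \<sigma> * Q ({1..r} - ran (tomap r \<sigma>))" by (rule indep[OF tomap_pperm[OF s] s])
  then show ?thesis using tomap_ran[OF s] by (simp add: Q_empty)
qed

lemma phi_S: "1 \<le> i \<Longrightarrow> i < r \<Longrightarrow> phi (bas (sperm r i)) = S i"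
  using phi_bas[OF tomap_pperm[OF tr_permutes]] PHI_tomap[OF tr_permutes] NFS_tr by (simp add: sperm_tomap)

lemma phi_P: assumes "1 \<le> j" "j \<le> r" shows "phi (bas (pproj r j)) = P j"
proof -
  have "PHI (pproj r j) = Phi id * Q ({1..r} - ran (pproj r j))"
    by (rule indep[OF pproj_pperm permutes_id]) (auto simp: pproj_def split: if_splits)
  also have "{1..r} - ran (pproj r j) = {j}" using assms by (auto simp: pproj_ran)
  also have "Q {j} = P j" using Q_insert[of "{}" j] assms by (simp add: Q_empty)
  finally show ?thesis using phi_bas[OF pproj_pperm] Phi_id' by simp
qed

lemma phi_one: "phi (bas (pid r)) = 1"
  using phi_bas[OF tomap_pperm[OF permutes_id]] PHI_tomap[OF permutes_id] by (simp add: pid_tomap NFS_id)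

lemma phi_hom: "PA_hom r z \<iota> phi"
  unfolding PA_hom_def using phi_add phi_smult phi_mult phi_one by blast


context
  fixes \<psi> :: "((nat \<rightharpoonup> nat) \<Rightarrow> complex) \<Rightarrow> 'a"
  assumes hom: "PA_hom r z \<iota> \<psi>"
    and vS: "\<forall>i\<in>{1..r-1}. \<psi> (bas (sperm r i)) = S i"
    and vP: "\<forall>j\<in>{1..r}. \<psi> (bas (pproj r j)) = P j"
begin

lemma hadd: "f \<in> PA r \<Longrightarrow> g \<in> PA r \<Longrightarrow> \<psi> (\<lambda>e. f e + g e) = \<psi> f + \<psi> g" using hom by (simp add: PA_hom_def)
lemma hsmult: "f \<in> PA r \<Longrightarrow> \<psi> (\<lambda>e. c * f e) = \<iota> c * \<psi> f" using hom by (simp add: PA_hom_def)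
lemma hmult: "f \<in> PA r \<Longrightarrow> g \<in> PA r \<Longrightarrow> \<psi> (pmult r z f g) = \<psi> f * \<psi> g" using hom by (simp add: PA_hom_def)
lemma hone: "\<psi> (bas (pid r)) = 1" using hom by (simp add: PA_hom_def)

lemma h0: "\<psi> (\<lambda>e. 0) = 0"
proof -
  have z: "(\<lambda>e::nat \<rightharpoonup> nat. 0::complex) \<in> PA r" by (simp add: PA_def)
  have "\<psi> (\<lambda>e. 0 + 0) = \<psi> (\<lambda>e. 0) + \<psi> (\<lambda>e. 0)" by (rule hadd[OF z z])
  then show ?thesis by simp
qed

lemma hsum: "finite D \<Longrightarrow> (\<forall>d\<in>D. g d \<in> PA r) \<Longrightarrow> \<psi> (\<lambda>e. \<Sum>d\<in>D. g d e) = (\<Sum>d\<in>D. \<psi> (g d))"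
proof (induction D rule: finite_induct)
  case empty then show ?case using h0 by simp
next
  case (insert x D)
  have "\<psi> (\<lambda>e. \<Sum>d\<in>insert x D. g d e) = \<psi> (\<lambda>e. g x e + (\<Sum>d\<in>D. g d e))" using insert by simp
  also have "\<dots> = \<psi> (g x) + \<psi> (\<lambda>e. \<Sum>d\<in>D. g d e)" using insert PA_sum[of D g r] by (intro hadd) auto
  finally show ?case using insert by simp
qed

lemma psi_tomap: "\<sigma> permutes {1..r} \<Longrightarrow> \<psi> (bas (tomap r \<sigma>)) = Phi \<sigma>"
proof -
  assume s: "\<sigma> permutes {1..r}"
  obtain ws where ws: "set ws \<subseteq> {1..<r}" "\<sigma> = wp ws id" using gen[OF s] by blast
  have "\<forall>g. g permutes {1..r} \<longrightarrow> \<psi> (bas (tomap r g)) = Phi g \<longrightarrow> \<psi> (bas (tomap r (wp ws g))) = Phi (wp ws g)"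
    using ws(1)
  proof (induction ws)
    case Nil then show ?case by simp
  next
    case (Cons i ws)
    show ?case
    proof (intro allI impI)
      fix g assume g: "g permutes {1..r}" and H: "\<psi> (bas (tomap r g)) = Phi g"
      have i: "1 \<le> i" "i < r" using Cons.prems by auto
      have g': "tr i \<circ> g permutes {1..r}" using permutes_compose[OF g tr_permutes[OF i]] .
      have "bas (tomap r (tr i \<circ> g)) = pmult r z (bas (tomap r g)) (bas (sperm r i))"
        using pmult_bas0[OF tomap_pperm[OF g] tomap_pperm[OF tr_permutes[OF i]]] tomap_ran[OF g]
          tomap_comp[OF g] sperm_tomap[OF i] by simp
      then have "\<psi> (bas (tomap r (tr i \<circ> g))) = \<psi> (bas (tomap r g)) * \<psi> (bas (sperm r i))"
        using hmult[OF bas_PA[OF tomap_pperm[OF g]] bas_PA[OF tomap_pperm[OF tr_permutes[OF i]]]] sperm_tomap[OF i] by simp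
      also have "\<dots> = Phi g * S i" using H vS i by simp
      also have "\<dots> = Phi (tr i \<circ> g)" using NFS_hom[OF g tr_permutes[OF i]] NFS_tr[OF i] by simp
      finally have H': "\<psi> (bas (tomap r (tr i \<circ> g))) = Phi (tr i \<circ> g)" .
      have "set ws \<subseteq> {1..<r}" using Cons.prems by auto
      then have "\<psi> (bas (tomap r (wp ws (tr i \<circ> g)))) = Phi (wp ws (tr i \<circ> g))"
        using Cons.IH g' H' by blast
      then show "\<psi> (bas (tomap r (wp (i # ws) g))) = Phi (wp (i # ws) g)" by (simp only: wp.simps)
    qed
  qed
  then have "\<psi> (bas (tomap r (wp ws id))) = Phi (wp ws id)"
    using permutes_id[of "{1..r}"] hone by (simp add: pid_tomap[symmetric] NFS_id)
  then show ?thesis using ws(2) by (simp only:)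
qed

lemma psi_pidY: "finite T \<Longrightarrow> T \<subseteq> {1..r} \<Longrightarrow> \<psi> (bas (pidY r T)) = Q T"
proof (induction T rule: finite_induct)
  case empty then show ?case using hone by (simp add: pidY_empty Q_empty)
next
  case (insert j T)
  have j: "1 \<le> j" "j \<le> r" using insert by auto
  have "{1..r} \<subseteq> ran (pproj r j) \<union> dom (pidY r T)" using insert by (auto simp: pproj_ran pidY_dom)
  then have "bas (pidY r (insert j T)) = pmult r z (bas (pproj r j)) (bas (pidY r T))"
    using pmult_bas0[OF pproj_pperm pidY_pperm] by (simp add: pidY_insert)
  then have "\<psi> (bas (pidY r (insert j T))) = P j * Q T"
    using hmult[OF bas_PA[OF pproj_pperm] bas_PA[OF pidY_pperm]] insert vP j by simp
  then show ?case using Q_insert[of T j] insert j by simp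
qed

lemma psi_bas: assumes d: "d \<in> pperm r" shows "\<psi> (bas d) = PHI d"
proof -
  define \<sigma> where "\<sigma> = ext r d"
  define T where "T = {1..r} - ran d"
  have s: "\<sigma> permutes {1..r}" "\<forall>x\<in>dom d. d x = Some (\<sigma> x)" using ext_prop[OF d] by (auto simp: \<sigma>_def)
  have rd: "ran d = \<sigma> ` dom d" using ran_ext[OF s] .
  have fd: "dom d \<subseteq> {1..r}" using d by (simp add: pperm_def)
  have deq: "pcomp (tomap r \<sigma>) (pidY r T) = d"
  proof
    fix x
    show "pcomp (tomap r \<sigma>) (pidY r T) x = d x"
    proof (cases "x \<in> dom d")
      case True
      then have "x \<in> {1..r}" "\<sigma> x \<in> ran d" using fd rd by auto
      moreover have "\<sigma> x \<in> {1..r}" using permutes_in_image[OF s(1)] calculation by simp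
      ultimately show ?thesis using s True by (simp add: pcomp_def tomap_def pidY_def T_def)
    next
      case False
      then have dx: "d x = None" by auto
      show ?thesis
      proof (cases "x \<in> {1..r}")
        case True
        have "\<sigma> x \<notin> ran d" using False rd permutes_inj[OF s(1)] by (auto simp: inj_eq)
        then show ?thesis using True dx by (simp add: pcomp_def tomap_def pidY_def T_def)
      next
        case False then show ?thesis using dx by (simp add: pcomp_def tomap_def)
      qed
    qed
  qed
  have "bas d = pmult r z (bas (tomap r \<sigma>)) (bas (pidY r T))"
    using pmult_bas0[OF tomap_pperm[OF s(1)] pidY_pperm] tomap_ran[OF s(1)] deq by simp
  then have "\<psi> (bas d) = Phi \<sigma> * Q T"
    using hmult[OF bas_PA[OF tomap_pperm[OF s(1)]] bas_PA[OF pidY_pperm]] psi_tomap[OF s(1)] psi_pidY[of T]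
    by (simp add: T_def)
  then show ?thesis by (simp add: PHI_def \<sigma>_def T_def)
qed

lemma psi_eq: "f \<in> PA r \<Longrightarrow> \<psi> f = phi f"
proof -
  assume f: "f \<in> PA r"
  have "\<psi> f = \<psi> (\<lambda>e. \<Sum>d\<in>pperm r. f d * bas d e)" using PA_decomp[OF f] by simp
  also have "\<dots> = (\<Sum>d\<in>pperm r. \<psi> (\<lambda>e. f d * bas d e))"
    by (rule hsum[OF finite_pperm]) (auto simp: PA_def bas_def)
  also have "\<dots> = (\<Sum>d\<in>pperm r. \<iota> (f d) * PHI d)"
    by (rule sum.cong[OF refl]) (simp add: hsmult[OF bas_PA] psi_bas)
  finally show ?thesis by (simp add: phi_def)
qed

end

end

lemma pm0: "d1 \<in> pperm r \<Longrightarrow> d2 \<in> pperm r \<Longrightarrow> ran d1 = {1..r} \<or> dom d2 = {1..r} \<Longrightarrow>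
  pmult r z (bas d1) (bas d2) = bas (pcomp d1 d2)"
  by (rule pmult_bas0) auto

lemma sp_pperm: "1 \<le> i \<Longrightarrow> i < r \<Longrightarrow> sperm r i \<in> pperm r"
  using tomap_pperm[OF tr_permutes[of i r]] by (simp add: sperm_tomap)
lemma sp_ran: "1 \<le> i \<Longrightarrow> i < r \<Longrightarrow> ran (sperm r i) = {1..r}"
  using tomap_ran[OF tr_permutes[of i r]] by (simp add: sperm_tomap)
lemma sp_dom: "1 \<le> i \<Longrightarrow> i < r \<Longrightarrow> dom (sperm r i) = {1..r}"
  by (simp add: sperm_tomap tomap_dom)

lemma rels_PA:
  assumes r1: "r \<ge> 1"
  shows "rels r (pmult r z) (bas (pid r)) (\<lambda>f e. z * f e) (\<lambda>i. bas (sperm r i)) (\<lambda>j. bas (pproj r j))"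
proof -
  let ?s = "sperm r" and ?p = "pproj r"
  have A1: "\<forall>j\<in>{1..r}. pmult r z (bas (?p j)) (bas (?p j)) = (\<lambda>e. z * bas (?p j) e)"
  proof
    fix j assume j: "j \<in> {1..r}"
    have "pexp r (?p j) (?p j) = 1" using j r1 by (simp add: pexp_def pproj_ran pproj_dom)
    moreover have "pcomp (?p j) (?p j) = ?p j" by (auto simp: fun_eq_iff pcomp_def pproj_def map_comp_def)
    ultimately show "pmult r z (bas (?p j)) (bas (?p j)) = (\<lambda>e. z * bas (?p j) e)"
      by (simp add: pmult_bas[OF pproj_pperm pproj_pperm])
  qed
  have A2: "\<forall>i\<in>{1..r}. \<forall>j\<in>{1..r}. i \<noteq> j \<longrightarrow> pmult r z (bas (?p i)) (bas (?p j)) = pmult r z (bas (?p j)) (bas (?p i))"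
  proof (intro ballI impI)
    fix i j assume ij: "i \<in> {1..r}" "j \<in> {1..r}" "i \<noteq> j"
    have "pmult r z (bas (?p i)) (bas (?p j)) = bas (pcomp (?p i) (?p j))"
      by (rule pmult_bas0[OF pproj_pperm pproj_pperm]) (use ij in \<open>auto simp: pproj_ran pproj_dom\<close>)
    moreover have "pmult r z (bas (?p j)) (bas (?p i)) = bas (pcomp (?p j) (?p i))"
      by (rule pmult_bas0[OF pproj_pperm pproj_pperm]) (use ij in \<open>auto simp: pproj_ran pproj_dom\<close>)
    moreover have "pcomp (?p i) (?p j) = pcomp (?p j) (?p i)" by (auto simp: fun_eq_iff pcomp_def pproj_def map_comp_def)
    ultimately show "pmult r z (bas (?p i)) (bas (?p j)) = pmult r z (bas (?p j)) (bas (?p i))" by simp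
  qed
  have ss: "pmult r z (bas (?s i)) (bas (?s j)) = bas (tomap r (tr j \<circ> tr i))" if "1 \<le> i" "i < r" "1 \<le> j" "j < r" for i j
    using pm0[OF sp_pperm sp_pperm, of i r j z] that sp_ran[of i r] tomap_comp[OF tr_permutes[of i r], of "tr j"]
    by (simp add: sperm_tomap)
  have sss: "pmult r z (pmult r z (bas (?s i)) (bas (?s j))) (bas (?s k)) = bas (tomap r (tr k \<circ> tr j \<circ> tr i))"
    if "1 \<le> i" "i < r" "1 \<le> j" "j < r" "1 \<le> k" "k < r" for i j k
  proof -
    have p: "tr j \<circ> tr i permutes {1..r}" using that by (intro permutes_compose tr_permutes)
    have "pmult r z (bas (tomap r (tr j \<circ> tr i))) (bas (tomap r (tr k))) = bas (pcomp (tomap r (tr j \<circ> tr i)) (tomap r (tr k)))"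
      by (rule pm0[OF tomap_pperm[OF p] tomap_pperm[OF tr_permutes]]) (use that in \<open>auto simp: tomap_dom\<close>)
    then show ?thesis using ss[OF that(1-4)] tomap_comp[OF p] that by (simp add: sperm_tomap o_assoc)
  qed
  have B1: "\<forall>i\<in>{1..r-1}. pmult r z (bas (?s i)) (bas (?s i)) = bas (pid r)"
  proof
    fix i assume i: "i \<in> {1..r-1}"
    have "tr i \<circ> tr i = id" by (auto simp: fun_eq_iff tr_def Transposition.transpose_def)
    moreover have "1 \<le> i" "i < r" using i by auto
    ultimately show "pmult r z (bas (?s i)) (bas (?s i)) = bas (pid r)" using ss[of i i] by (simp add: pid_tomap)
  qed
  have B2: "\<forall>i\<in>{1..r-1}. i + 1 \<le> r - 1 \<longrightarrow>
        pmult r z (pmult r z (bas (?s i)) (bas (?s (i+1)))) (bas (?s i)) = pmult r z (pmult r z (bas (?s (i+1))) (bas (?s i))) (bas (?s (i+1)))"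
  proof (intro ballI impI)
    fix i assume i: "i \<in> {1..r-1}" "i + 1 \<le> r - 1"
    have "tr i \<circ> tr (Suc i) \<circ> tr i = tr (Suc i) \<circ> tr i \<circ> tr (Suc i)"
      by (auto simp: fun_eq_iff tr_def Transposition.transpose_def)
    then show "pmult r z (pmult r z (bas (?s i)) (bas (?s (i+1)))) (bas (?s i)) = pmult r z (pmult r z (bas (?s (i+1))) (bas (?s i))) (bas (?s (i+1)))"
      using sss[of i "Suc i" i] sss[of "Suc i" i "Suc i"] i by auto
  qed
  have B3: "\<forall>i\<in>{1..r-1}. \<forall>j\<in>{1..r-1}. (i + 1 < j \<or> j + 1 < i) \<longrightarrow>
        pmult r z (bas (?s i)) (bas (?s j)) = pmult r z (bas (?s j)) (bas (?s i))"
  proof (intro ballI impI)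
    fix i j assume ij: "i \<in> {1..r-1}" "j \<in> {1..r-1}" "i + 1 < j \<or> j + 1 < i"
    have "tr j \<circ> tr i = tr i \<circ> tr j" using ij(3) by (auto simp: fun_eq_iff tr_def Transposition.transpose_def)
    then show "pmult r z (bas (?s i)) (bas (?s j)) = pmult r z (bas (?s j)) (bas (?s i))" using ss[of i j] ss[of j i] ij by auto
  qed
  have C1: "\<forall>i\<in>{1..r-1}. pmult r z (bas (?s i)) (pmult r z (bas (?p i)) (bas (?p (i+1)))) = pmult r z (bas (?p i)) (bas (?p (i+1))) \<and>
                    pmult r z (pmult r z (bas (?p i)) (bas (?p (i+1)))) (bas (?s i)) = pmult r z (bas (?p i)) (bas (?p (i+1)))"
  proof
    fix i assume i: "i \<in> {1..r-1}"
    then have i': "1 \<le> i" "i < r" by auto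
    define q where "q = pcomp (?p i) (?p (i+1))"
    have qp: "q \<in> pperm r" unfolding q_def by (rule pcomp_pperm[OF pproj_pperm pproj_pperm])
    have e: "pmult r z (bas (?p i)) (bas (?p (i+1))) = bas q" unfolding q_def
      by (rule pmult_bas0[OF pproj_pperm pproj_pperm]) (auto simp: pproj_ran pproj_dom)
    have "pmult r z (bas (?s i)) (bas q) = bas (pcomp (?s i) q)" by (rule pm0[OF sp_pperm[OF i'] qp]) (simp add: sp_ran[OF i'])
    moreover have "pcomp (?s i) q = q"
      by (auto simp: fun_eq_iff q_def pcomp_def pproj_def sperm_def map_comp_def)
    moreover have "pmult r z (bas q) (bas (?s i)) = bas (pcomp q (?s i))" by (rule pm0[OF qp sp_pperm[OF i']]) (simp add: sp_dom[OF i'])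
    moreover have "pcomp q (?s i) = q"
      by (auto simp: fun_eq_iff q_def pcomp_def pproj_def sperm_def map_comp_def)
    ultimately show "pmult r z (bas (?s i)) (pmult r z (bas (?p i)) (bas (?p (i+1)))) = pmult r z (bas (?p i)) (bas (?p (i+1))) \<and>
                    pmult r z (pmult r z (bas (?p i)) (bas (?p (i+1)))) (bas (?s i)) = pmult r z (bas (?p i)) (bas (?p (i+1)))"
      using e by simp
  qed
  have C2: "\<forall>i\<in>{1..r-1}. pmult r z (pmult r z (bas (?s i)) (bas (?p i))) (bas (?s i)) = bas (?p (i+1))"
  proof
    fix i assume i: "i \<in> {1..r-1}"
    then have i': "1 \<le> i" "i < r" by auto
    have e: "pmult r z (bas (?s i)) (bas (?p i)) = bas (pcomp (?s i) (?p i))"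
      by (rule pm0[OF sp_pperm[OF i'] pproj_pperm]) (simp add: sp_ran[OF i'])
    have "pmult r z (bas (pcomp (?s i) (?p i))) (bas (?s i)) = bas (pcomp (pcomp (?s i) (?p i)) (?s i))"
      by (rule pm0[OF pcomp_pperm[OF sp_pperm[OF i'] pproj_pperm] sp_pperm[OF i']]) (simp add: sp_dom[OF i'])
    moreover have "pcomp (pcomp (?s i) (?p i)) (?s i) = ?p (i+1)"
      using i' by (auto simp: fun_eq_iff pcomp_def pproj_def sperm_def map_comp_def)
    ultimately show "pmult r z (pmult r z (bas (?s i)) (bas (?p i))) (bas (?s i)) = bas (?p (i+1))" using e by simp
  qed
  have C3: "\<forall>i\<in>{1..r-1}. \<forall>j\<in>{1..r}. j \<noteq> i \<and> j \<noteq> i + 1 \<longrightarrow>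
        pmult r z (bas (?s i)) (bas (?p j)) = pmult r z (bas (?p j)) (bas (?s i))"
  proof (intro ballI impI)
    fix i j assume i: "i \<in> {1..r-1}" and j: "j \<in> {1..r}" and ij: "j \<noteq> i \<and> j \<noteq> i + 1"
    then have i': "1 \<le> i" "i < r" by auto
    have "pmult r z (bas (?s i)) (bas (?p j)) = bas (pcomp (?s i) (?p j))"
      by (rule pm0[OF sp_pperm[OF i'] pproj_pperm]) (simp add: sp_ran[OF i'])
    moreover have "pmult r z (bas (?p j)) (bas (?s i)) = bas (pcomp (?p j) (?s i))"
      by (rule pm0[OF pproj_pperm sp_pperm[OF i']]) (simp add: sp_dom[OF i'])
    moreover have "pcomp (?s i) (?p j) = pcomp (?p j) (?s i)"
      using i' ij by (auto simp: fun_eq_iff pcomp_def pproj_def sperm_def map_comp_def)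
    ultimately show "pmult r z (bas (?s i)) (bas (?p j)) = pmult r z (bas (?p j)) (bas (?s i))" by simp
  qed
  show ?thesis unfolding rels_def using A1 A2 B1 B2 B3 C1 C2 C3 by blast
qed

theorem theorem8p6:
  fixes r :: nat and z :: complex
    and \<iota> :: "complex \<Rightarrow> 'a::ring_1" and S P :: "nat \<Rightarrow> 'a"
  assumes "r \<ge> 1" and "z \<noteq> 0"
  shows "rels r (pmult r z) (bas (pid r)) (\<lambda>f e. z * f e)
            (\<lambda>i. bas (sperm r i)) (\<lambda>j. bas (pproj r j))
       \<and> (cplx_alg \<iota> \<and> rels r (*) 1 (\<lambda>x. \<iota> z * x) S P \<longrightarrow>
            (\<exists>\<phi>. PA_hom r z \<iota> \<phi>
                 \<and> (\<forall>i\<in>{1..r-1}. \<phi> (bas (sperm r i)) = S i)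
                 \<and> (\<forall>j\<in>{1..r}. \<phi> (bas (pproj r j)) = P j)
                 \<and> (\<forall>\<psi>. PA_hom r z \<iota> \<psi>
                        \<and> (\<forall>i\<in>{1..r-1}. \<psi> (bas (sperm r i)) = S i)
                        \<and> (\<forall>j\<in>{1..r}. \<psi> (bas (pproj r j)) = P j)
                      \<longrightarrow> (\<forall>f\<in>PA r. \<psi> f = \<phi> f))))"
proof (intro conjI impI)
  show "rels r (pmult r z) (bas (pid r)) (\<lambda>f e. z * f e) (\<lambda>i. bas (sperm r i)) (\<lambda>j. bas (pproj r j))"
    by (rule rels_PA) (rule assms(1))
next
  assume H: "cplx_alg \<iota> \<and> rels r (*) 1 (\<lambda>x. \<iota> z * x) S P"
  then have ca: "cplx_alg \<iota>" and R: "rels r (*) 1 (\<lambda>x. \<iota> z * x) S P" by auto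
  note Rd = R[unfolded rels_def]
  interpret R: rook r S P \<iota> z
  proof (unfold_locales)
    fix i assume "1 \<le> i" "i < r" then show "S i * S i = 1" using Rd by auto
  next
    fix i assume "1 \<le> i" "Suc i < r" then show "S i * S (Suc i) * S i = S (Suc i) * S i * S (Suc i)" using Rd by auto
  next
    fix i j assume "1 \<le> i" "i < r" "1 \<le> j" "j < r" "Suc i < j" then show "S i * S j = S j * S i" using Rd by auto
  next
    fix j assume "1 \<le> j" "j \<le> r" then show "P j * P j = \<iota> z * P j" using Rd by auto
  next
    fix i j assume "1 \<le> i" "i \<le> r" "1 \<le> j" "j \<le> r" then show "P i * P j = P j * P i" using Rd by (cases "i = j") auto
  next
    fix i assume "1 \<le> i" "i < r" then show "S i * (P i * P (Suc i)) = P i * P (Suc i)" using Rd by auto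
  next
    fix i assume "1 \<le> i" "i < r" then show "S i * P i * S i = P (Suc i)" using Rd by auto
  next
    fix i j assume "1 \<le> i" "i < r" "1 \<le> j" "j \<le> r" "j \<noteq> i" "j \<noteq> Suc i" then show "S i * P j = P j * S i" using Rd by auto
  next
    show "cplx_alg \<iota>" by (rule ca)
  qed
  show "\<exists>\<phi>. PA_hom r z \<iota> \<phi>
                 \<and> (\<forall>i\<in>{1..r-1}. \<phi> (bas (sperm r i)) = S i)
                 \<and> (\<forall>j\<in>{1..r}. \<phi> (bas (pproj r j)) = P j)
                 \<and> (\<forall>\<psi>. PA_hom r z \<iota> \<psi>
                        \<and> (\<forall>i\<in>{1..r-1}. \<psi> (bas (sperm r i)) = S i)
                        \<and> (\<forall>j\<in>{1..r}. \<psi> (bas (pproj r j)) = P j)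
                      \<longrightarrow> (\<forall>f\<in>PA r. \<psi> f = \<phi> f))"
  proof (intro exI conjI allI impI ballI)
    show "PA_hom r z \<iota> R.phi" by (rule R.phi_hom)
  next
    fix i assume "i \<in> {1..r-1}" then show "R.phi (bas (sperm r i)) = S i" using R.phi_S by auto
  next
    fix j assume "j \<in> {1..r}" then show "R.phi (bas (pproj r j)) = P j" using R.phi_P by auto
  next
    fix \<psi> f assume h: "PA_hom r z \<iota> \<psi> \<and> (\<forall>i\<in>{1..r-1}. \<psi> (bas (sperm r i)) = S i) \<and> (\<forall>j\<in>{1..r}. \<psi> (bas (pproj r j)) = P j)"
      and f: "f \<in> PA r"
    show "\<psi> f = R.phi f" using R.psi_eq[of \<psi> f] h f by blast
  qed
qed

end
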